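(* Assume the standing setting below and run the DMFW algorithm with $\gamma_k=\frac{2}{k+1}$ and $\eta_k=\frac{2}{k+2}$. Then for every $i\in\mathcal N$ and $k\ge1$, $$\mathbb E\|p_k^i-\bar y_k\|^2\le\frac{4C_2}{(k+2)^2}.$$
   Context: Setting. There are $n$ agents $\mathcal N=\{1,\dots,n\}$ connected by a connected graph $\mathcal G=(\mathcal N,\mathcal E)$ with weight matrix $C=[c_{ij}]\in\mathbb R^{n\times n}$, where $c_{ij}\ge 0$ and $c_{ij}=0$ whenever $j\ne i$ and $(i,j)\notin\mathcal E$. $C$ is doubly stochastic, i.e. all row sums and all column sums equal $1$. Let $\lambda$ be the second largest eigenvalue of $C$ in magnitude. It is assumed that $|\lambda|<1$ and that for all vectors $x^1,\dots,x^n\in\mathbb R^p$, with $\bar x=\frac1n\sum_i x^i$ and $\hat x^i=\sum_j c_{ij}x^j$, one has $\big(\sum_i\|\hat x^i-\bar x\|^2\big)^{1/2}\le|\lambda|\big(\sum_i\|x^i-\bar x\|^2\big)^{1/2}$. Let $k_0$ be the smallest positive integer with $|\lambda|\le (k_0/(k_0+1))^2$. Problem data. $\mathcal X\subset\mathbb R^p$ is convex and compact with diameter $D$, i.e. $\|x-x'\|\le D$ for all $x,x'\in\mathcal X$. For each $i$, $\xi^i$ is a random variable. The function $f_i(\cdot,\xi)$ is differentiable with $L$-Lipschitz gradient for every $\xi$. $F_i(x)=\mathbb E[f_i(x,\xi^i)]$ is differentiable with $\nabla F_i(x)=\mathbb E[\nabla f_i(x,\xi^i)]$ and $L$-Lipschitz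 gradient. For all $x\in\mathcal X$ and $i$, $\mathbb E\|\nabla F_i(x)-\nabla f_i(x,\xi^i)\|^2\le\delta^2$. Set $F=\frac1n\sum_{i=1}^nF_i$. $G>0$ is a constant with $\mathbb E\|\nabla f_i(x,\xi^i)\|^2\le G^2$ and $\mathbb E\|\nabla f_i(x,\xi^i)\|\le G$ for all $x\in\mathcal X$ and $i\in\mathcal N$. DMFW algorithm. Fix step sizes $\gamma_k,\eta_k\in(0,1]$ and deterministic initial points $x_1^i\in\mathcal X$. The samples $\xi_k^i$ ($k\ge1$, $i\in\mathcal N$) are mutually independent, and $\xi_k^i$ has the distribution of $\xi^i$. For $k=1,2,\dots$ and each $i$: - $\hat x_k^i=\sum_{j=1}^n c_{ij}x_k^j$. - For $k=1$: $y_1^i=s_1^i=\nabla f_i(\hat x_1^i,\xi_1^i)$. For $k\ge2$: $y_k^i=(1-\gamma_k)y_{k-1}^i+\nabla f_i(\hat x_k^i,\xi_k^i)-(1-\gamma_k)\nabla f_i(\hat x_{k-1}^i,\xi_k^i)$ and $s_k^i=\sum_j c_{ij}s_{k-1}^j+y_k^i-y_{k-1}^i$. - $p_k^i=\sum_j c_{ij}s_k^j$. - $\theta_k^i\in\arg\min_{\phi\in\mathcal X}\langle p_k^i,\phi\rangle$. - $x_{k+1}^i=\hat x_k^i+\eta_k(\theta_k^i-\hat x_k^i)$. Notation: $\bar x_k=\frac1n\sum_i x_k^i$, $\bar y_k=\frac1n\sum_i y_k^i$. Constants: - $C_1=k_0\sqrt n D$. - $\psi=\max\{\max_i\mathbb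 E\|y_1^i\|,\ 2G+2L(D+2C_1)\}$. - $\hat\psi=\max\{\max_i\mathbb E\|y_1^i\|^2,\ 4L(D+2C_1)\psi+4G\psi+8G^2+8L^2(D+2C_1)^2\}$. - $C_2=k_0^3(4n)^{k_0}n\big(12L^2(D+2C_1)^2+12(G^2+\hat\psi)\big)$. *)

theory Defs
  imports "HOL-Probability.Probability" "Jordan_Normal_Form.Char_Poly"
begin

text \<open>Second largest eigenvalue modulus of the real n x n matrix C = [c i j] (i, j < n):
  the characteristic polynomial of C (viewed over the complex numbers) has exactly n roots
  counted with multiplicity; we sort their moduli in decreasing order and take the second one.\<close>
definition slem :: "nat \<Rightarrow> (nat \<Rightarrow> nat \<Rightarrow> real) \<Rightarrow> real" where
  "slem n c = rev (sorted_list_of_multiset (image_mset cmod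
      (proots (char_poly (Matrix.mat n n (\<lambda>(i,j). complex_of_real (c i j))))))) ! 1"

definition k0_of :: "real \<Rightarrow> nat" where
  "k0_of lam = (LEAST k::nat. 0 < k \<and> \<bar>lam\<bar> \<le> (real k / (real k + 1))^2)"

definition mix :: "nat \<Rightarrow> (nat \<Rightarrow> nat \<Rightarrow> real) \<Rightarrow> (nat \<Rightarrow> 'e::real_vector) \<Rightarrow> nat \<Rightarrow> 'e" where
  "mix n c v i = (\<Sum>j<n. c i j *\<^sub>R v j)"

definition avg :: "nat \<Rightarrow> (nat \<Rightarrow> 'e::real_vector) \<Rightarrow> 'e" where
  "avg n v = (1 / real n) *\<^sub>R (\<Sum>i<n. v i)"

text \<open>The argument m corresponds to iteration k = m + 1;
  the result is the triple (x_k, y_k, s_k) of agent-indexed vectors.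
  g i x \<xi> is the stochastic gradient nabla f_i(x, \<xi>), lmo p is the chosen minimiser
  theta in argmin_{phi in X} <p, phi>, smp k i is the sample \<xi>_k^i,
  gam and eta are the step sizes gamma_k, eta_k.\<close>
fun dmfw_run :: "nat \<Rightarrow> (nat \<Rightarrow> nat \<Rightarrow> real) \<Rightarrow> (nat \<Rightarrow> 'e::real_vector \<Rightarrow> 'b \<Rightarrow> 'e)
    \<Rightarrow> ('e \<Rightarrow> 'e) \<Rightarrow> (nat \<Rightarrow> 'e) \<Rightarrow> (nat \<Rightarrow> real) \<Rightarrow> (nat \<Rightarrow> real) \<Rightarrow> (nat \<Rightarrow> nat \<Rightarrow> 'b)
    \<Rightarrow> nat \<Rightarrow> (nat \<Rightarrow> 'e) \<times> (nat \<Rightarrow> 'e) \<times> (nat \<Rightarrow> 'e)" where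
  "dmfw_run n c g lmo x1 gam eta smp 0 =
     (x1, (\<lambda>i. g i (mix n c x1 i) (smp 1 i)), (\<lambda>i. g i (mix n c x1 i) (smp 1 i)))"
| "dmfw_run n c g lmo x1 gam eta smp (Suc m) =
     (let (x, y, s) = dmfw_run n c g lmo x1 gam eta smp m;
          k = Suc m;
          xh = mix n c x;
          p = mix n c s;
          x' = (\<lambda>i. xh i + eta k *\<^sub>R (lmo (p i) - xh i));
          xh' = mix n c x';
          y' = (\<lambda>i. (1 - gam (k + 1)) *\<^sub>R y i + g i (xh' i) (smp (k + 1) i)
                    - (1 - gam (k + 1)) *\<^sub>R g i (xh i) (smp (k + 1) i));
          s' = (\<lambda>i. mix n c s i + y' i - y i)
      in (x', y', s'))"

definition dmfw_x where "dmfw_x n c g lmo x1 gam eta smp k = fst (dmfw_run n c g lmo x1 gam eta smp (k - 1))"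
definition dmfw_y where "dmfw_y n c g lmo x1 gam eta smp k = fst (snd (dmfw_run n c g lmo x1 gam eta smp (k - 1)))"
definition dmfw_s where "dmfw_s n c g lmo x1 gam eta smp k = snd (snd (dmfw_run n c g lmo x1 gam eta smp (k - 1)))"
definition dmfw_p where "dmfw_p n c g lmo x1 gam eta smp k = mix n c (dmfw_s n c g lmo x1 gam eta smp k)"

end

theory Submission
  imports Defs
begin

lemma dx_Suc:
  assumes "1 \<le> k"
  shows "dmfw_x n c g lmo x1 gam eta smp (Suc k) =
    (\<lambda>i. mix n c (dmfw_x n c g lmo x1 gam eta smp k) i + eta k *\<^sub>R
       (lmo (dmfw_p n c g lmo x1 gam eta smp k i) - mix n c (dmfw_x n c g lmo x1 gam eta smp k) i))"
  using assms by (cases k) (auto simp: dmfw_x_def dmfw_p_def dmfw_s_def Let_def split: prod.split)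

lemma dy_Suc:
  assumes "1 \<le> k"
  shows "dmfw_y n c g lmo x1 gam eta smp (Suc k) =
    (\<lambda>i. (1 - gam (Suc k)) *\<^sub>R dmfw_y n c g lmo x1 gam eta smp k i
       + g i (mix n c (dmfw_x n c g lmo x1 gam eta smp (Suc k)) i) (smp (Suc k) i)
       - (1 - gam (Suc k)) *\<^sub>R g i (mix n c (dmfw_x n c g lmo x1 gam eta smp k) i) (smp (Suc k) i))"
  using assms by (cases k) (auto simp: dmfw_x_def dmfw_y_def dmfw_p_def dmfw_s_def Let_def split: prod.split)

lemma ds_Suc:
  assumes "1 \<le> k"
  shows "dmfw_s n c g lmo x1 gam eta smp (Suc k) =
    (\<lambda>i. mix n c (dmfw_s n c g lmo x1 gam eta smp k) i + dmfw_y n c g lmo x1 gam eta smp (Suc k) i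
        - dmfw_y n c g lmo x1 gam eta smp k i)"
  using assms by (cases k) (auto simp: dmfw_x_def dmfw_y_def dmfw_p_def dmfw_s_def Let_def split: prod.split)

lemma d_one:
  "dmfw_x n c g lmo x1 gam eta smp 1 = x1"
  "dmfw_y n c g lmo x1 gam eta smp 1 = (\<lambda>i. g i (mix n c x1 i) (smp 1 i))"
  "dmfw_s n c g lmo x1 gam eta smp 1 = (\<lambda>i. g i (mix n c x1 i) (smp 1 i))"
  by (auto simp: dmfw_x_def dmfw_y_def dmfw_s_def)

lemma conv_Suc:
  fixes l :: real
  shows "(\<Sum>j\<in>{1..Suc k}. l^(Suc k - j) * f j) = l * (\<Sum>j\<in>{1..k}. l^(k-j) * f j) + f (Suc k)"
proof -
  have "(\<Sum>j\<in>{1..Suc k}. l^(Suc k - j) * f j) = (\<Sum>j\<in>{1..k}. l^(Suc k - j) * f j) + f (Suc k)"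
    by (simp add: sum.cl_ivl_Suc)
  also have "(\<Sum>j\<in>{1..k}. l^(Suc k - j) * f j) = (\<Sum>j\<in>{1..k}. l * (l^(k-j) * f j))"
    by (rule sum.cong) (auto simp: Suc_diff_le)
  finally show ?thesis by (simp add: sum_distrib_left)
qed

lemma geo_bound:
  fixes l :: real and k0 :: nat
  assumes l0: "0 \<le> l" and lk: "l \<le> (real k0/(real k0+1))\<^sup>2" and k0: "1 \<le> k0"
  shows "(\<Sum>j\<in>{1..k}. l^(k-j) * 1) \<le> real k0 + 1"
proof (induction k)
  case 0 then show ?case by simp
next
  case (Suc k)
  have r1: "real k0/(real k0+1) \<le> 1" by simp
  have r0: "0 \<le> real k0/(real k0+1)" by simp
  have "(real k0/(real k0+1))\<^sup>2 = (real k0/(real k0+1)) * (real k0/(real k0+1))"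
    by (simp add: power2_eq_square)
  also have "\<dots> \<le> real k0/(real k0+1) * 1" by (rule mult_left_mono[OF r1 r0])
  finally have "(real k0/(real k0+1))\<^sup>2 \<le> real k0/(real k0+1)" by simp
  then have "l \<le> real k0/(real k0+1)" using lk by linarith
  then have "l * (real k0 + 1) \<le> real k0" by (simp add: field_simps)
  moreover have "l * (\<Sum>j\<in>{1..k}. l^(k-j) * 1) \<le> l * (real k0 + 1)"
    by (rule mult_left_mono[OF Suc.IH l0])
  ultimately show ?case using conv_Suc[of l k "\<lambda>_. 1"] by linarith
qed

lemma useq:
  fixes u :: "nat \<Rightarrow> real" and l a :: real and k0 :: nat
  assumes l0: "0 \<le> l" and lk: "l \<le> (real k0/(real k0+1))\<^sup>2" and k0: "1 \<le> k0" and a: "0 \<le> a"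
    and ub: "\<And>k. 1 \<le> k \<Longrightarrow> u k \<le> a"
    and rec: "\<And>k. 1 \<le> k \<Longrightarrow> u (Suc k) \<le> l * u k + 2/(real k + 2) * a"
    and k: "1 \<le> k"
  shows "u k \<le> 2*(real k0+1)*a/(real k+1)"
  using k
proof (induct k rule: nat_induct_at_least)
  case base
  have "2*a \<le> (2*real k0+2)*a" using a by (simp add: mult_right_mono)
  then show ?case using ub[of 1] by simp
next
  case (Suc k)
  show ?case
  proof (cases "k + 2 \<le> 2*(k0+1)")
    case True
    have "a * (real k + 2) \<le> 2*(real k0+1)*a"
    proof -
      have "real (k+2) \<le> real (2*(k0+1))" using True by (simp only: of_nat_le_iff)
      then have "real k + 2 \<le> 2*(real k0+1)" by simp
      then show ?thesis using a by (simp add: mult_left_mono mult.commute)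
    qed
    then have "a \<le> 2*(real k0+1)*a/(real k+2)" by (simp add: field_simps)
    moreover have "real (Suc k) + 1 = real k + 2" by simp
    ultimately show ?thesis using ub[of "Suc k"] by (metis order_trans le_add1 Suc_le_mono Suc(1) plus_1_eq_Suc)
  next
    case False
    then have kk: "k0 \<le> k" by simp
    have q: "real k0/(real k0+1) * (real k + 2) \<le> real k + 1"
    proof -
      have "real k0 * (real k + 2) \<le> (real k + 1) * (real k0 + 1)"
        using kk by (simp add: algebra_simps)
      then show ?thesis by (simp add: field_simps)
    qed
    have r0: "0 \<le> real k0/(real k0+1)" by simp
    have "l * (real k + 2) \<le> (real k0/(real k0+1))\<^sup>2 * (real k + 2)"
      using lk by (simp add: mult_right_mono)
    also have "\<dots> = real k0/(real k0+1) * (real k0/(real k0+1) * (real k + 2))"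
      by (simp add: power2_eq_square)
    also have "\<dots> \<le> real k0/(real k0+1) * (real k + 1)"
      using q r0 by (rule mult_left_mono)
    finally have lq: "l * (real k + 2) \<le> real k0/(real k0+1) * (real k + 1)" .
    have "u (Suc k) \<le> l * (2*(real k0+1)*a/(real k+1)) + 2/(real k + 2) * a"
      using rec[OF Suc(1)] mult_left_mono[OF Suc(2) l0] by linarith
    moreover have "l * (2*(real k0+1)*a/(real k+1)) \<le> 2*real k0*a/(real k+2)"
    proof -
      have m: "l*(real k+2)*(2*(real k0+1)*a) \<le> (real k0/(real k0+1)*(real k+1))*(2*(real k0+1)*a)"
        by (rule mult_right_mono[OF lq]) (simp add: a)
      have e0: "(real k0/(real k0+1)*(real k+1))*(2*(real k0+1)*a) = (real k+1)*(2*real k0*a)"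
        by (simp add: field_simps)
      have e1: "l*(2*(real k0+1)*a/(real k+1)) = (l*(real k+2)*(2*(real k0+1)*a)) / ((real k+1)*(real k+2))"
      proof -
        have "(l*(real k+2)*(2*(real k0+1)*a)) / ((real k+1)*(real k+2)) = ((real k+2)*(l*(2*(real k0+1)*a))) / ((real k+2)*(real k+1))"
          by (simp add: ac_simps)
        also have "\<dots> = l*(2*(real k0+1)*a)/(real k+1)" by (rule nonzero_mult_divide_mult_cancel_left) simp
        finally show ?thesis by simp
      qed
      have "(l*(real k+2)*(2*(real k0+1)*a)) / ((real k+1)*(real k+2)) \<le> (real k+1)*(2*real k0*a)/((real k+1)*(real k+2))"
        using m e0 by (intro divide_right_mono) auto
      also have "\<dots> = 2*real k0*a/(real k+2)" by (rule nonzero_mult_divide_mult_cancel_left) simp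
      finally show ?thesis using e1 by simp
    qed
    ultimately have "u (Suc k) \<le> 2*real k0*a/(real k+2) + 2/(real k+2)*a" by linarith
    moreover have "2*real k0*a/(real k+2) + 2/(real k+2)*a = 2*(real k0+1)*a/(real (Suc k)+1)"
    proof -
      have "2*real k0*a/(real k+2) + 2/(real k+2)*a = (2*real k0*a + 2*a)/(real k+2)"
        by (simp add: add_divide_distrib)
      also have "2*real k0*a + 2*a = 2*(real k0+1)*a" by (simp add: algebra_simps)
      finally have "2*real k0*a/(real k+2) + 2/(real k+2)*a = 2*(real k0+1)*a/(real k+2)" .
      moreover have "real k + 2 = real (Suc k) + 1" by simp
      ultimately show ?thesis by metis
    qed
    ultimately show ?thesis by simp
  qed
qed

lemma Tsum_bound:
  fixes l :: real and k0 :: nat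
  assumes l0: "0 \<le> l" and lk: "l \<le> (real k0/(real k0+1))\<^sup>2" and k0: "1 \<le> k0" and k: "1 \<le> k"
  shows "(\<Sum>j\<in>{1..k}. l^(k-j) * (1/(real j+1)\<^sup>2)) \<le> 6*real k0^3/(real k+2)\<^sup>2"
  using k
proof (induct k rule: nat_induct_at_least)
  case base
  have "1 \<le> real k0^3" using k0 by simp
  then show ?case by simp
next
  case (Suc k)
  define T where "T = (\<Sum>j\<in>{1..k}. l^(k-j) * (1/(real j+1)\<^sup>2))"
  define A where "A = 6*real k0^3"
  have l1: "l \<le> 1"
  proof -
    have "real k0/(real k0+1) \<le> 1" by simp
    then have "(real k0/(real k0+1))\<^sup>2 \<le> 1" by (simp add: power_le_one)
    then show ?thesis using lk by linarith
  qed
  have eq: "(\<Sum>j\<in>{1..Suc k}. l^(Suc k-j) * (1/(real j+1)\<^sup>2)) = l * T + 1/(real k+2)\<^sup>2"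
    unfolding T_def by (simp only: conv_Suc) (simp add: add.commute)
  show ?case
  proof (cases "2*k0 \<le> k + 1")
    case True
    define t where "t = 1/(real k0+1)"
    have t0: "0 < t" "t \<le> 1/2" using k0 by (auto simp: t_def field_simps)
    have r: "real k0/(real k0+1) = 1 - t" by (simp add: t_def field_simps)
    have qge: "1 - t/2 \<le> (real k+2)/(real k+3)"
    proof -
      have "real (2*k0) \<le> real (k+1)" using True by (simp only: of_nat_le_iff)
      then have "2*(real k0+1) \<le> real k + 3" by simp
      then have "1/(real k+3) \<le> t/2" by (simp add: t_def field_simps)
      moreover have "(real k+2)/(real k+3) = 1 - 1/(real k+3)" by (simp add: field_simps)
      ultimately show ?thesis by linarith
    qed
    have q2: "1 - t \<le> ((real k+2)/(real k+3))\<^sup>2"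
    proof -
      have "0 \<le> 1 - t/2" using t0 by simp
      then have "(1 - t/2)\<^sup>2 \<le> ((real k+2)/(real k+3))\<^sup>2" by (rule power_mono[OF qge])
      moreover have "1 - t \<le> (1 - t/2)\<^sup>2" by (simp add: power2_eq_square algebra_simps)
      ultimately show ?thesis by linarith
    qed
    have diff: "t/2 \<le> ((real k+2)/(real k+3))\<^sup>2 - l"
    proof -
      have "l \<le> (1-t)\<^sup>2" using lk r by simp
      moreover have "(1-t)\<^sup>2 = (1 - t) - t*(1-t)" by (simp add: power2_eq_square algebra_simps)
      moreover have "t/2 \<le> t*(1-t)"
      proof -
        have "t*t \<le> t*(1/2)" using t0 by (intro mult_left_mono) auto
        then show ?thesis by (simp add: algebra_simps)
      qed
      ultimately show ?thesis using q2 by linarith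
    qed
    have A1: "1 \<le> A * (t/2)"
    proof -
      have "real k0 + 1 \<le> 2 * real k0" using k0 by simp
      also have "\<dots> \<le> 2 * real k0^3"
      proof -
        have "real k0 \<le> real k0 ^3" using k0 by (simp add: power_increasing[of 1 3 "real k0", simplified])
        then show ?thesis by simp
      qed
      finally have "real k0 + 1 \<le> 3 * real k0^3" by simp
      then show ?thesis by (simp add: A_def t_def field_simps)
    qed
    have TA: "T \<le> A/(real k+2)\<^sup>2" using Suc(2) by (simp add: T_def A_def)
    have "l * T + 1/(real k+2)\<^sup>2 \<le> (l*A + 1)/(real k+2)\<^sup>2"
      using mult_left_mono[OF TA l0] by (simp add: add_divide_distrib)
    also have "\<dots> \<le> A * ((real k+2)/(real k+3))\<^sup>2 /(real k+2)\<^sup>2"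
    proof -
      have "A*(t/2) \<le> A * (((real k+2)/(real k+3))\<^sup>2 - l)"
        using diff by (rule mult_left_mono) (simp add: A_def)
      then have "l*A + 1 \<le> A * ((real k+2)/(real k+3))\<^sup>2" using A1 by (simp add: algebra_simps)
      then show ?thesis by (simp add: divide_right_mono)
    qed
    also have "\<dots> = A/(real (Suc k)+2)\<^sup>2"
    proof -
      have "((real k+2)/(real k+3))\<^sup>2 = (real k+2)\<^sup>2/(real k+3)\<^sup>2" by (simp add: power_divide)
      moreover have "A * ((real k+2)\<^sup>2/(real k+3)\<^sup>2)/(real k+2)\<^sup>2 = A/(real k+3)\<^sup>2"
        by (simp add: field_simps)
      moreover have "real (Suc k) + 2 = real k + 3" by simp
      ultimately show ?thesis by simp
    qed
    finally show ?thesis using eq by (simp add: A_def)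
  next
    case False
    have each: "\<And>j. j \<in> {1..Suc k} \<Longrightarrow> l^(Suc k-j) * (1/(real j+1)\<^sup>2) \<le> 1/4"
    proof -
      fix j assume "j \<in> {1..Suc k}"
      then have "2 \<le> real j + 1" by simp
      then have "2\<^sup>2 \<le> (real j + 1)\<^sup>2" by (rule power_mono) simp
      then have "4 \<le> (real j + 1)\<^sup>2" by simp
      then have "1/(real j+1)\<^sup>2 \<le> 1/4" by (simp add: field_simps)
      moreover have "l^(Suc k-j) \<le> 1" using l0 l1 by (simp add: power_le_one)
      moreover have "0 \<le> 1/(real j+1)\<^sup>2" by simp
      ultimately show "l^(Suc k-j) * (1/(real j+1)\<^sup>2) \<le> 1/4"
        using mult_mono[of "l^(Suc k-j)" 1 "1/(real j+1)\<^sup>2" "1/4"] by simp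
    qed
    have "(\<Sum>j\<in>{1..Suc k}. l^(Suc k-j) * (1/(real j+1)\<^sup>2)) \<le> (\<Sum>j\<in>{1..Suc k}. 1/4)"
      by (rule sum_mono) (rule each)
    also have "\<dots> = real (Suc k) / 4" by simp
    also have "\<dots> \<le> 6*real k0^3/(real (Suc k)+2)\<^sup>2"
    proof -
      have h1: "real (Suc k) \<le> 2*real k0" using False by simp
      have h2: "real (Suc k) + 2 \<le> 3*real k0" using False k0 by simp
      have h3: "(real (Suc k)+2)\<^sup>2 \<le> (3*real k0)\<^sup>2" using h2 by (rule power_mono) simp
      have "real (Suc k) * (real (Suc k)+2)\<^sup>2 \<le> (2*real k0) * (3*real k0)\<^sup>2"
        using h1 h3 by (intro mult_mono) auto
      also have "\<dots> = 18 * real k0^3" by (simp add: power2_eq_square power3_eq_cube)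
      finally have "real (Suc k) * (real (Suc k)+2)\<^sup>2 \<le> 18 * real k0^3" .
      moreover have "0 \<le> real k0^3" by simp
      ultimately have "real (Suc k) * (real (Suc k)+2)\<^sup>2 \<le> 24 * real k0^3" by linarith
      moreover have "0 < (real (Suc k)+2)\<^sup>2" by simp
      ultimately show ?thesis by (simp add: field_simps)
    qed
    finally show ?thesis .
  qed
qed

definition nm :: "nat \<Rightarrow> (nat \<Rightarrow> 'e::real_normed_vector) \<Rightarrow> real" where
  "nm n v = sqrt (\<Sum>i<n. (norm (v i))\<^sup>2)"

lemma nm_nonneg: "0 \<le> nm n v"
  by (simp add: nm_def sum_nonneg)

lemma nm_comp:
  assumes "i < n" shows "norm (v i) \<le> nm n v"
proof -
  have "(norm (v i))\<^sup>2 \<le> (\<Sum>i<n. (norm (v i))\<^sup>2)"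
    using assms by (intro member_le_sum) auto
  then show ?thesis unfolding nm_def by (rule real_le_rsqrt)
qed

lemma nm_mono:
  assumes "\<And>i. i < n \<Longrightarrow> norm (a i) \<le> norm (b i)"
  shows "nm n a \<le> nm n b"
  unfolding nm_def using assms by (intro real_sqrt_le_mono sum_mono power_mono) auto

lemma nm_triangle: "nm n (\<lambda>i. a i + b i) \<le> nm n a + nm n b"
proof -
  have "nm n (\<lambda>i. a i + b i) \<le> L2_set (\<lambda>i. norm (a i) + norm (b i)) {..<n}"
    unfolding nm_def L2_set_def
    by (intro real_sqrt_le_mono sum_mono power_mono norm_triangle_ineq) auto
  also have "\<dots> \<le> L2_set (\<lambda>i. norm (a i)) {..<n} + L2_set (\<lambda>i. norm (b i)) {..<n}"
    by (rule L2_set_triangle_ineq)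
  also have "\<dots> = nm n a + nm n b" by (simp add: nm_def L2_set_def)
  finally show ?thesis .
qed

lemma nm_scale: "nm n (\<lambda>i. r *\<^sub>R v i) = \<bar>r\<bar> * nm n v"
proof -
  have "(\<Sum>i<n. (norm (r *\<^sub>R v i))\<^sup>2) = r\<^sup>2 * (\<Sum>i<n. (norm (v i))\<^sup>2)"
    by (simp add: sum_distrib_left power_mult_distrib)
  then show ?thesis by (simp add: nm_def real_sqrt_mult)
qed

lemma nm_bound:
  assumes "\<And>i. i < n \<Longrightarrow> norm (v i) \<le> M" and "0 \<le> M"
  shows "nm n v \<le> sqrt (real n) * M"
proof -
  have "(\<Sum>i<n. (norm (v i))\<^sup>2) \<le> (\<Sum>i<n. M\<^sup>2)"
    using assms by (intro sum_mono power_mono) auto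
  then have "nm n v \<le> sqrt (real n * M\<^sup>2)" unfolding nm_def by (simp add: real_sqrt_le_mono)
  also have "\<dots> = sqrt (real n) * M" using assms(2) by (simp add: real_sqrt_mult)
  finally show ?thesis .
qed

lemma avg_add: "avg n (\<lambda>i. a i + b i) = avg n a + avg n b"
  by (simp add: avg_def sum.distrib scaleR_add_right)

lemma avg_diff: "avg n (\<lambda>i. a i - b i) = avg n a - avg n b"
  by (simp add: avg_def sum_subtractf scaleR_diff_right)

lemma avg_scale: "avg n (\<lambda>i. r *\<^sub>R a i) = r *\<^sub>R avg n a"
  by (simp add: avg_def scaleR_sum_right[symmetric])

lemma mix_add: "mix n c (\<lambda>j. a j + b j) i = mix n c a i + mix n c b i"
  by (simp add: mix_def sum.distrib scaleR_add_right)

lemma avg_mix: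
  assumes "\<forall>j<n. (\<Sum>i<n. c i j) = 1"
  shows "avg n (mix n c v) = avg n v"
proof -
  have "(\<Sum>i<n. mix n c v i) = (\<Sum>j<n. (\<Sum>i<n. c i j) *\<^sub>R v j)"
    unfolding mix_def by (subst sum.swap) (simp add: scaleR_sum_left)
  also have "\<dots> = (\<Sum>j<n. v j)" using assms by simp
  finally show ?thesis by (simp add: avg_def)
qed

lemma norm_avg:
  assumes "0 < n" and "\<And>i. i < n \<Longrightarrow> norm (v i) \<le> M"
  shows "norm (avg n v) \<le> M"
proof -
  have "norm (avg n v) = (1/real n) * norm (\<Sum>i<n. v i)" by (simp add: avg_def)
  also have "\<dots> \<le> (1/real n) * (\<Sum>i<n. norm (v i))"
    by (intro mult_left_mono norm_sum) auto
  also have "\<dots> \<le> (1/real n) * (\<Sum>i<n. M)"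
    using assms by (intro mult_left_mono sum_mono) auto
  also have "\<dots> = M" using assms(1) by simp
  finally show ?thesis .
qed

lemma mix_in:
  assumes "convex X" "\<forall>i<n. (\<Sum>j<n. c i j) = 1" "\<forall>i<n. \<forall>j<n. 0 \<le> c i j"
    "\<And>j. j < n \<Longrightarrow> v j \<in> X" "i < n"
  shows "mix n c v i \<in> X"
  unfolding mix_def using assms by (intro convex_sum) auto

lemma avg_in:
  assumes "convex X" "0 < n" "\<And>j. j < n \<Longrightarrow> v j \<in> X"
  shows "avg n v \<in> X"
proof -
  have "avg n v = (\<Sum>j<n. (1/real n) *\<^sub>R v j)" by (simp add: avg_def scaleR_sum_right)
  also have "\<dots> \<in> X" using assms by (intro convex_sum) auto
  finally show ?thesis .
qed

lemma dev_le:
  fixes v :: "nat \<Rightarrow> 'e::real_inner"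
  shows "nm n (\<lambda>i. v i - avg n v) \<le> nm n v"
proof (cases "n = 0")
  case True then show ?thesis by (simp add: nm_def)
next
  case False
  define m where "m = avg n v"
  have sv: "(\<Sum>i<n. v i) = real n *\<^sub>R m" using False by (simp add: m_def avg_def)
  have sq: "\<And>x. (norm (x - m))\<^sup>2 = (norm x)\<^sup>2 - 2 * (x \<bullet> m) + (norm m)\<^sup>2"
    by (simp add: power2_norm_eq_inner inner_diff_left inner_diff_right inner_commute)
  have "(\<Sum>i<n. (norm (v i - m))\<^sup>2) = (\<Sum>i<n. (norm (v i))\<^sup>2) - 2 * ((\<Sum>i<n. v i) \<bullet> m) + real n * (norm m)\<^sup>2"
    by (simp add: sq sum.distrib sum_subtractf sum_distrib_left inner_sum_left)
  also have "(\<Sum>i<n. v i) \<bullet> m = real n * (norm m)\<^sup>2" by (simp add: sv power2_norm_eq_inner)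
  finally have "(\<Sum>i<n. (norm (v i - m))\<^sup>2) \<le> (\<Sum>i<n. (norm (v i))\<^sup>2)" by simp
  then show ?thesis unfolding nm_def m_def by (rule real_sqrt_le_mono)
qed

fun Yb :: "(nat \<Rightarrow> nat \<Rightarrow> real) \<Rightarrow> nat \<Rightarrow> nat \<Rightarrow> real" where
  "Yb b 0 i = 0"
| "Yb b (Suc j) i = (1 - 2/(real j + 2)) * Yb b j i + 2/(real j + 2) * (b (Suc j) i)\<^sup>2"

lemma convex_sq:
  fixes a b t :: real
  assumes "0 \<le> t" "t \<le> 1"
  shows "((1-t)*a + t*b)\<^sup>2 \<le> (1-t)*a\<^sup>2 + t*b\<^sup>2"
proof -
  have "(1-t)*a\<^sup>2 + t*b\<^sup>2 - ((1-t)*a + t*b)\<^sup>2 = t*(1-t)*(a-b)\<^sup>2"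
    by (simp add: power2_eq_square algebra_simps)
  moreover have "0 \<le> t*(1-t)*(a-b)\<^sup>2" using assms by simp
  ultimately show ?thesis by linarith
qed

locale dm =
  fixes n :: nat and c :: "nat \<Rightarrow> nat \<Rightarrow> real" and g :: "nat \<Rightarrow> 'e::euclidean_space \<Rightarrow> 'b \<Rightarrow> 'e"
    and lmo :: "'e \<Rightarrow> 'e" and x1 :: "nat \<Rightarrow> 'e" and smp :: "nat \<Rightarrow> nat \<Rightarrow> 'b"
    and X :: "'e set" and SS :: "'b set" and D L l :: real and k0 :: nat
  assumes n_pos: "0 < n"
    and c_nonneg: "\<forall>i<n. \<forall>j<n. 0 \<le> c i j"
    and c_row: "\<forall>i<n. (\<Sum>j<n. c i j) = 1"
    and c_col: "\<forall>j<n. (\<Sum>i<n. c i j) = 1"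
    and contr: "\<And>v::nat \<Rightarrow> 'e. nm n (\<lambda>i. mix n c v i - avg n v) \<le> l * nm n (\<lambda>i. v i - avg n v)"
    and l0: "0 \<le> l" and lk: "l \<le> (real k0/(real k0+1))\<^sup>2" and k0: "1 \<le> k0"
    and Xc: "convex X" and Xd: "\<forall>x\<in>X. \<forall>x'\<in>X. norm (x - x') \<le> D"
    and lmo_in: "\<forall>q. lmo q \<in> X" and x1_in: "\<forall>i<n. x1 i \<in> X"
    and glip: "\<forall>i<n. \<forall>s\<in>SS. \<forall>x x'. norm (g i x s - g i x' s) \<le> L * norm (x - x')"
    and smp_in: "\<And>k i. 1 \<le> k \<Longrightarrow> i < n \<Longrightarrow> smp k i \<in> SS"
    and L0: "0 \<le> L" and D0: "0 \<le> D"
begin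

definition "xs k = dmfw_x n c g lmo x1 (\<lambda>k::nat. 2/(real k+1)) (\<lambda>k::nat. 2/(real k+2)) smp k"
definition "ys k = dmfw_y n c g lmo x1 (\<lambda>k::nat. 2/(real k+1)) (\<lambda>k::nat. 2/(real k+2)) smp k"
definition "ss k = dmfw_s n c g lmo x1 (\<lambda>k::nat. 2/(real k+1)) (\<lambda>k::nat. 2/(real k+2)) smp k"
definition "xh k = mix n c (xs k)"

lemma xs_Suc: "1 \<le> k \<Longrightarrow> xs (Suc k) = (\<lambda>i. xh k i + (2/(real k+2)) *\<^sub>R (lmo (mix n c (ss k) i) - xh k i))"
  unfolding xs_def xh_def ss_def by (simp add: dx_Suc dmfw_p_def)

lemma ys_Suc: "1 \<le> k \<Longrightarrow> ys (Suc k) = (\<lambda>i. (1 - 2/(real k+2)) *\<^sub>R ys k i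
       + g i (xh (Suc k) i) (smp (Suc k) i) - (1 - 2/(real k+2)) *\<^sub>R g i (xh k i) (smp (Suc k) i))"
proof -
  assume k: "1 \<le> k"
  have e: "2/(real (Suc k)+1) = 2/(real k+2)" by simp
  show ?thesis unfolding ys_def xh_def xs_def using dy_Suc[OF k, of n c g lmo x1 "\<lambda>k::nat. 2/(real k+1)"]
    by (simp only: e)
qed

lemma ss_Suc: "1 \<le> k \<Longrightarrow> ss (Suc k) = (\<lambda>i. mix n c (ss k) i + (ys (Suc k) i - ys k i))"
  unfolding ss_def ys_def by (simp add: ds_Suc add_diff_eq)

lemma one: "xs 1 = x1" "ys 1 = (\<lambda>i. g i (mix n c x1 i) (smp 1 i))" "ss 1 = ys 1"
  unfolding xs_def ys_def ss_def by (rule d_one(1), rule d_one(2), simp only: d_one)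

lemma l1: "l \<le> 1"
proof -
  have "real k0/(real k0+1) \<le> 1" by simp
  then have "(real k0/(real k0+1))\<^sup>2 \<le> 1" by (simp add: power_le_one)
  then show ?thesis using lk by linarith
qed

lemma xs_in: "1 \<le> k \<Longrightarrow> i < n \<Longrightarrow> xs k i \<in> X"
proof (induct k arbitrary: i rule: nat_induct_at_least)
  case base then show ?case unfolding one(1) using x1_in by simp
next
  case (Suc k)
  have xh: "xh k i \<in> X" unfolding xh_def using Suc by (intro mix_in[OF Xc c_row c_nonneg]) auto
  have t: "lmo (mix n c (ss k) i) \<in> X" using lmo_in by simp
  define e where "e = 2/(real k+2)"
  have e0: "0 \<le> e" "e \<le> 1" by (auto simp: e_def)
  have "xh k i + e *\<^sub>R (lmo (mix n c (ss k) i) - xh k i) = (1-e) *\<^sub>R xh k i + e *\<^sub>R lmo (mix n c (ss k) i)"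
    by (simp add: algebra_simps)
  also have "\<dots> \<in> X" using Xc xh t e0 by (intro convexD) auto
  finally show ?case using xs_Suc[OF Suc(1)] by (simp add: e_def)
qed

lemma xh_in: "1 \<le> k \<Longrightarrow> i < n \<Longrightarrow> xh k i \<in> X"
  unfolding xh_def by (intro mix_in[OF Xc c_row c_nonneg]) (auto intro: xs_in)

definition "u k = nm n (\<lambda>i. xs k i - avg n (xs k))"

lemma u_le: "1 \<le> k \<Longrightarrow> u k \<le> sqrt (real n) * D"
  unfolding u_def using avg_in[OF Xc n_pos, of "xs k"] xs_in Xd D0
  by (intro nm_bound) auto

lemma u_rec: "1 \<le> k \<Longrightarrow> u (Suc k) \<le> l * u k + 2/(real k+2) * (sqrt (real n) * D)"
proof -
  assume k: "1 \<le> k"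
  define e where "e = 2/(real k+2)"
  define w where "w = (\<lambda>i. lmo (mix n c (ss k) i) - xh k i)"
  have xs': "xs (Suc k) = (\<lambda>i. xh k i + e *\<^sub>R w i)" using xs_Suc[OF k] by (simp add: e_def w_def)
  have av: "avg n (\<lambda>i. xh k i + e *\<^sub>R w i) = avg n (xs k) + e *\<^sub>R avg n w"
    unfolding avg_add avg_scale xh_def avg_mix[OF c_col] ..
  have dv: "(\<lambda>i. xs (Suc k) i - avg n (xs (Suc k))) = (\<lambda>i. (xh k i - avg n (xs k)) + e *\<^sub>R (w i - avg n w))"
    unfolding xs' av by (simp add: algebra_simps)
  have t1: "u (Suc k) \<le> nm n (\<lambda>i. xh k i - avg n (xs k)) + nm n (\<lambda>i. e *\<^sub>R (w i - avg n w))"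
    unfolding u_def dv by (rule nm_triangle)
  have t2: "nm n (\<lambda>i. xh k i - avg n (xs k)) \<le> l * u k" unfolding xh_def u_def by (rule contr)
  have t3: "nm n (\<lambda>i. e *\<^sub>R (w i - avg n w)) = e * nm n (\<lambda>i. w i - avg n w)"
    by (simp add: nm_scale e_def)
  have t4: "nm n (\<lambda>i. w i - avg n w) \<le> nm n w" by (rule dev_le)
  have t5: "nm n w \<le> sqrt (real n) * D"
    unfolding w_def using lmo_in xh_in[OF k] Xd D0 by (intro nm_bound) auto
  have "e * nm n (\<lambda>i. w i - avg n w) \<le> e * (sqrt (real n) * D)"
    using t4 t5 by (intro mult_left_mono) (auto simp: e_def)
  then show ?thesis using t1 t2 t3 by (simp add: e_def)
qed

definition "B = 2*(real k0+1)*(sqrt (real n) * D)"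

lemma u_bd: assumes "1 \<le> k" shows "u k \<le> B/(real k+1)"
proof -
  have a0: "0 \<le> sqrt (real n) * D" using D0 by simp
  have "u k \<le> 2*(real k0+1)*(sqrt (real n) * D)/(real k+1)"
    by (rule useq[OF l0 lk k0 a0 u_le u_rec assms])
  then show ?thesis by (simp add: B_def)
qed

lemma B0: "0 \<le> B" unfolding B_def using D0 by simp

lemma xh_dev: "1 \<le> k \<Longrightarrow> i < n \<Longrightarrow> norm (xh k i - avg n (xs k)) \<le> B/(real k+1)"
proof -
  assume k: "1 \<le> k" and i: "i < n"
  have "norm (xh k i - avg n (xs k)) \<le> nm n (\<lambda>i. xh k i - avg n (xs k))" using i by (rule nm_comp)
  also have "\<dots> \<le> l * u k" unfolding xh_def u_def by (rule contr)
  also have "\<dots> \<le> 1 * u k" using l1 by (intro mult_right_mono) (auto simp: u_def nm_nonneg)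
  also have "\<dots> \<le> B/(real k+1)" using u_bd[OF k] by simp
  finally show ?thesis .
qed

definition "Q = 2*D + 2*B"

lemma Q0: "0 \<le> Q" unfolding Q_def using B0 D0 by simp

lemma xh_step: "1 \<le> k \<Longrightarrow> i < n \<Longrightarrow> norm (xh (Suc k) i - xh k i) \<le> Q/(real k+1)"
proof -
  assume k: "1 \<le> k" and i: "i < n"
  define e where "e = 2/(real k+2)"
  define w where "w = (\<lambda>i. lmo (mix n c (ss k) i) - xh k i)"
  have xs': "xs (Suc k) = (\<lambda>i. xh k i + e *\<^sub>R w i)" using xs_Suc[OF k] by (simp add: e_def w_def)
  have av: "avg n (xs (Suc k)) - avg n (xs k) = e *\<^sub>R avg n w"
    unfolding xs' avg_add avg_scale xh_def avg_mix[OF c_col] by simp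
  have nw: "norm (avg n w) \<le> D"
    using n_pos unfolding w_def using lmo_in xh_in[OF k] Xd by (intro norm_avg) auto
  define A1 where "A1 = xh (Suc k) i - avg n (xs (Suc k))"
  define A2 where "A2 = avg n (xs (Suc k)) - avg n (xs k)"
  define A3 where "A3 = xh k i - avg n (xs k)"
  have "norm (xh (Suc k) i - xh k i) = norm (A1 + A2 - A3)" by (simp add: A1_def A2_def A3_def)
  moreover have "norm (A1 + A2 - A3) \<le> norm (A1 + A2) + norm A3" by (rule norm_triangle_ineq4)
  moreover have "norm (A1 + A2) \<le> norm A1 + norm A2" by (rule norm_triangle_ineq)
  moreover have "norm A1 \<le> B/(real (Suc k)+1)" unfolding A1_def using k i by (intro xh_dev) auto
  moreover have "norm A3 \<le> B/(real k+1)" unfolding A3_def using k i by (intro xh_dev) auto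
  moreover have "norm A2 \<le> e * D"
  proof -
    have "norm A2 = e * norm (avg n w)" unfolding A2_def av by (simp add: e_def)
    also have "\<dots> \<le> e * D" using nw by (intro mult_left_mono) (auto simp: e_def)
    finally show ?thesis .
  qed
  ultimately have "norm (xh (Suc k) i - xh k i) \<le> B/(real (Suc k)+1) + e * D + B/(real k+1)"
    by linarith
  also have "\<dots> \<le> B/(real k+1) + 2*D/(real k+1) + B/(real k+1)"
  proof -
    have "B/(real (Suc k)+1) \<le> B/(real k+1)" using B0 by (intro divide_left_mono) auto
    moreover have "e * D \<le> 2*D/(real k+1)" unfolding e_def using D0
      by (simp add: frac_le divide_right_mono)
    ultimately show ?thesis by linarith
  qed
  also have "\<dots> = Q/(real k+1)" by (simp add: Q_def add_divide_distrib)
  finally show ?thesis .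
qed

end

lemma aux_cs: fixes s x d :: real assumes "x \<noteq> 0" shows "(s / x) * (s * x * d) = (s * s) * d"
  using assms by (simp add: field_simps)

context dm
begin

definition "K = L*D + L*Q/2"
definition "bt j i = norm (g i (x1 i) (smp j i)) + K"

lemma K0: "0 \<le> K" and LDK: "L*D \<le> K"
  using L0 D0 Q0 by (auto simp: K_def)

lemma gb: "1 \<le> j \<Longrightarrow> i < n \<Longrightarrow> x \<in> X \<Longrightarrow> norm (g i x (smp j i)) \<le> bt j i"
proof -
  assume j: "1 \<le> j" and i: "i < n" and x: "x \<in> X"
  have "norm (g i x (smp j i)) \<le> norm (g i (x1 i) (smp j i)) + norm (g i x (smp j i) - g i (x1 i) (smp j i))"
    by (rule norm_triangle_sub)
  also have "norm (g i x (smp j i) - g i (x1 i) (smp j i)) \<le> L * norm (x - x1 i)"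
    using glip smp_in[OF j i] i by auto
  also have "L * norm (x - x1 i) \<le> L * D" using Xd x x1_in i L0 by (intro mult_left_mono) auto
  finally show ?thesis using LDK by (simp add: bt_def)
qed

lemma gdiff: "1 \<le> k \<Longrightarrow> i < n \<Longrightarrow>
    norm (g i (xh (Suc k) i) (smp (Suc k) i) - g i (xh k i) (smp (Suc k) i)) \<le> L*Q/(real k+1)"
proof -
  assume k: "1 \<le> k" and i: "i < n"
  have "norm (g i (xh (Suc k) i) (smp (Suc k) i) - g i (xh k i) (smp (Suc k) i))
      \<le> L * norm (xh (Suc k) i - xh k i)"
    using glip smp_in[of "Suc k" i] i by auto
  also have "\<dots> \<le> L * (Q/(real k+1))" using xh_step[OF k i] L0 by (intro mult_left_mono) auto
  finally show ?thesis by simp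
qed

lemma coef: "(1 - 2/(real k+2)) * (L*Q/(real k+1)) \<le> 2/(real k+2) * (L*Q/2)"
proof -
  have e: "1 - 2/(real k+2) = real k/(real k+2)" by (simp add: field_simps)
  have "real k/(real k+1) \<le> 1" by simp
  then have "real k/(real k+1)/(real k+2) \<le> 1/(real k+2)" by (intro divide_right_mono) auto
  moreover have "real k/(real k+2) * (1/(real k+1)) = real k/(real k+1)/(real k+2)" by simp
  ultimately have h: "(1 - 2/(real k+2)) * (1/(real k+1)) \<le> 1/(real k+2)" using e by (simp add: mult.commute)
  have "(1 - 2/(real k+2)) * (L*Q/(real k+1)) = ((1 - 2/(real k+2)) * (1/(real k+1))) * (L*Q)" by simp
  also have "\<dots> \<le> 1/(real k+2) * (L*Q)" using h L0 Q0 by (intro mult_right_mono) auto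
  also have "\<dots> = (2 * (L*Q/2))/(real k+2)" by simp
  also have "\<dots> = 2/(real k+2) * (L*Q/2)" by (rule times_divide_eq_left[symmetric])
  finally show ?thesis .
qed

lemma y_step:
  assumes k: "1 \<le> k" and i: "i < n"
  shows "norm (ys (Suc k) i) \<le> (1 - 2/(real k+2)) * norm (ys k i) + 2/(real k+2) * bt (Suc k) i"
proof -
  define t where "t = 2/(real k+2)"
  have t0: "0 \<le> t" "t \<le> 1" by (auto simp: t_def)
  define y where "y = ys k i"
  define G1 where "G1 = g i (xh (Suc k) i) (smp (Suc k) i)"
  define G0 where "G0 = g i (xh k i) (smp (Suc k) i)"
  have eq: "ys (Suc k) i = (1-t) *\<^sub>R y + t *\<^sub>R G1 + (1-t) *\<^sub>R (G1 - G0)"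
    unfolding ys_Suc[OF k] t_def[symmetric] y_def G1_def G0_def by (simp add: algebra_simps)
  have n1: "norm ((1-t) *\<^sub>R y + t *\<^sub>R G1 + (1-t) *\<^sub>R (G1 - G0)) \<le> norm ((1-t) *\<^sub>R y + t *\<^sub>R G1) + norm ((1-t) *\<^sub>R (G1 - G0))"
    by (rule norm_triangle_ineq)
  have n2: "norm ((1-t) *\<^sub>R y + t *\<^sub>R G1) \<le> norm ((1-t) *\<^sub>R y) + norm (t *\<^sub>R G1)"
    by (rule norm_triangle_ineq)
  have "norm (ys (Suc k) i) \<le> norm ((1-t) *\<^sub>R y) + norm (t *\<^sub>R G1) + norm ((1-t) *\<^sub>R (G1 - G0))"
    unfolding eq using n1 n2 by linarith
  also have "\<dots> = (1-t) * norm y + t * norm G1 + (1-t) * norm (G1 - G0)" using t0 by simp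
  finally have a: "norm (ys (Suc k) i) \<le> (1-t) * norm y + t * norm G1 + (1-t) * norm (G1 - G0)" .
  have b: "t * norm G1 \<le> t * (norm (g i (x1 i) (smp (Suc k) i)) + L*D)"
  proof -
    have "norm G1 \<le> norm (g i (x1 i) (smp (Suc k) i)) + L*D"
    proof -
      have "norm G1 \<le> norm (g i (x1 i) (smp (Suc k) i)) + norm (G1 - g i (x1 i) (smp (Suc k) i))"
        by (rule norm_triangle_sub)
      also have "norm (G1 - g i (x1 i) (smp (Suc k) i)) \<le> L * norm (xh (Suc k) i - x1 i)"
        unfolding G1_def using glip smp_in[of "Suc k" i] i by auto
      also have "L * norm (xh (Suc k) i - x1 i) \<le> L * D"
        using Xd xh_in[of "Suc k" i] x1_in i k L0 by (intro mult_left_mono) auto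
      finally show ?thesis by simp
    qed
    then show ?thesis using t0 by (intro mult_left_mono) auto
  qed
  have c: "(1-t) * norm (G1 - G0) \<le> (1-t) * (L*Q/(real k+1))"
    unfolding G1_def G0_def using gdiff[OF k i] t0 by (intro mult_left_mono) auto
  have d: "(1-t) * (L*Q/(real k+1)) \<le> t * (L*Q/2)" unfolding t_def by (rule coef)
  have "t * (norm (g i (x1 i) (smp (Suc k) i)) + L*D) + t * (L*Q/2) = t * bt (Suc k) i"
    by (simp add: bt_def K_def algebra_simps)
  then show ?thesis using a b c d unfolding t_def y_def by linarith
qed

lemma dy_step:
  assumes k: "1 \<le> k" and i: "i < n"
  shows "norm (ys (Suc k) i - ys k i) \<le> 2/(real k+2) * (bt (Suc k) i + norm (ys k i))"
proof -
  define t where "t = 2/(real k+2)"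
  have t0: "0 \<le> t" "t \<le> 1" by (auto simp: t_def)
  define y where "y = ys k i"
  define G1 where "G1 = g i (xh (Suc k) i) (smp (Suc k) i)"
  define G0 where "G0 = g i (xh k i) (smp (Suc k) i)"
  have eq: "ys (Suc k) i - ys k i = t *\<^sub>R (G1 - y) + (1-t) *\<^sub>R (G1 - G0)"
    unfolding ys_Suc[OF k] t_def[symmetric] y_def G1_def G0_def by (simp add: algebra_simps)
  have "norm (ys (Suc k) i - ys k i) \<le> norm (t *\<^sub>R (G1 - y)) + norm ((1-t) *\<^sub>R (G1 - G0))"
    unfolding eq by (rule norm_triangle_ineq)
  also have "\<dots> = t * norm (G1 - y) + (1-t) * norm (G1 - G0)" using t0 by simp
  finally have a: "norm (ys (Suc k) i - ys k i) \<le> t * norm (G1 - y) + (1-t) * norm (G1 - G0)" .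
  have b: "t * norm (G1 - y) \<le> t * (bt (Suc k) i - L*Q/2 + norm y)"
  proof -
    have "norm G1 \<le> norm (g i (x1 i) (smp (Suc k) i)) + L*D"
    proof -
      have "norm G1 \<le> norm (g i (x1 i) (smp (Suc k) i)) + norm (G1 - g i (x1 i) (smp (Suc k) i))"
        by (rule norm_triangle_sub)
      also have "norm (G1 - g i (x1 i) (smp (Suc k) i)) \<le> L * norm (xh (Suc k) i - x1 i)"
        unfolding G1_def using glip smp_in[of "Suc k" i] i by auto
      also have "L * norm (xh (Suc k) i - x1 i) \<le> L * D"
        using Xd xh_in[of "Suc k" i] x1_in i k L0 by (intro mult_left_mono) auto
      finally show ?thesis by simp
    qed
    moreover have "norm (G1 - y) \<le> norm G1 + norm y" by (rule norm_triangle_ineq4)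
    ultimately have "norm (G1 - y) \<le> bt (Suc k) i - L*Q/2 + norm y" by (simp add: bt_def K_def)
    then show ?thesis using t0 by (intro mult_left_mono) auto
  qed
  have c: "(1-t) * norm (G1 - G0) \<le> (1-t) * (L*Q/(real k+1))"
    unfolding G1_def G0_def using gdiff[OF k i] t0 by (intro mult_left_mono) auto
  have d: "(1-t) * (L*Q/(real k+1)) \<le> t * (L*Q/2)" unfolding t_def by (rule coef)
  have "t * (bt (Suc k) i - L*Q/2 + norm y) + t * (L*Q/2) = t * (bt (Suc k) i + norm y)"
    by (simp add: algebra_simps)
  then show ?thesis using a b c d unfolding t_def y_def by linarith
qed

lemma bt0: "0 \<le> bt j i" using K0 by (simp add: bt_def)

lemma ysq: "1 \<le> k \<Longrightarrow> i < n \<Longrightarrow> (norm (ys k i))\<^sup>2 \<le> Yb bt k i"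
proof (induct k rule: nat_induct_at_least)
  case base
  have "mix n c x1 i \<in> X" using base x1_in by (intro mix_in[OF Xc c_row c_nonneg]) auto
  then have "norm (ys 1 i) \<le> bt 1 i" unfolding one(2) using base by (intro gb) auto
  then have "(norm (ys 1 i))\<^sup>2 \<le> (bt 1 i)\<^sup>2" by (intro power_mono) auto
  moreover have "Yb bt 1 i = (bt 1 i)\<^sup>2" by (simp add: One_nat_def)
  ultimately show ?case by simp
next
  case (Suc k)
  define t where "t = 2/(real k+2)"
  have t0: "0 \<le> t" "t \<le> 1" by (auto simp: t_def)
  have "norm (ys (Suc k) i) \<le> (1-t) * norm (ys k i) + t * bt (Suc k) i"
    unfolding t_def using y_step Suc by auto
  then have "(norm (ys (Suc k) i))\<^sup>2 \<le> ((1-t) * norm (ys k i) + t * bt (Suc k) i)\<^sup>2"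
    by (intro power_mono) auto
  also have "\<dots> \<le> (1-t) * (norm (ys k i))\<^sup>2 + t * (bt (Suc k) i)\<^sup>2" using t0 by (rule convex_sq)
  also have "\<dots> \<le> (1-t) * Yb bt k i + t * (bt (Suc k) i)\<^sup>2"
    using Suc t0 by (intro add_right_mono mult_left_mono) auto
  also have "\<dots> = Yb bt (Suc k) i" by (simp add: t_def)
  finally show ?case .
qed

definition "Z j i = (bt j i)\<^sup>2 + Yb bt (j-1) i"
definition "d j = (if j = 1 then nm n (ys 1) else nm n (\<lambda>i. ys j i - ys (j-1) i))"

lemma nm_sq: "(nm n v)\<^sup>2 = (\<Sum>i<n. (norm (v i))\<^sup>2)"
  unfolding nm_def by (simp add: sum_nonneg)

lemma sq_add2: "((a::real) + b)\<^sup>2 \<le> 2*(a\<^sup>2 + b\<^sup>2)"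
proof -
  have "0 \<le> (a-b)\<^sup>2" by simp
  then show ?thesis by (simp add: power2_eq_square algebra_simps)
qed

lemma dZ: assumes j: "1 \<le> j" shows "(real j+1)\<^sup>2 * (d j)\<^sup>2 \<le> 8 * (\<Sum>i<n. Z j i)"
proof (cases "j = 1")
  case True
  have "(real j+1)\<^sup>2 * (d j)\<^sup>2 = (\<Sum>i<n. 4 * (norm (ys 1 i))\<^sup>2)"
    using True by (simp add: d_def nm_sq sum_distrib_left)
  also have "\<dots> \<le> (\<Sum>i<n. 8 * Z j i)"
  proof (rule sum_mono)
    fix i assume i: "i \<in> {..<n}"
    have "(norm (ys 1 i))\<^sup>2 \<le> Yb bt 1 i" using i by (intro ysq) auto
    also have "Yb bt 1 i = (bt 1 i)\<^sup>2" by (simp add: One_nat_def)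
    finally have "(norm (ys 1 i))\<^sup>2 \<le> (bt 1 i)\<^sup>2" .
    moreover have "Z j i = (bt 1 i)\<^sup>2" using True by (simp add: Z_def)
    moreover have "0 \<le> (bt 1 i)\<^sup>2" by simp
    ultimately show "4 * (norm (ys 1 i))\<^sup>2 \<le> 8 * Z j i" by linarith
  qed
  finally show ?thesis by (simp add: sum_distrib_left)
next
  case False
  then obtain k where jk: "j = Suc k" and k: "1 \<le> k" using j by (cases j) auto
  have jj: "real j + 1 = real k + 2" using jk by simp
  have "(real j+1)\<^sup>2 * (d j)\<^sup>2 = (\<Sum>i<n. (real k+2)\<^sup>2 * (norm (ys (Suc k) i - ys k i))\<^sup>2)"
    unfolding jj using jk k by (simp add: d_def nm_sq sum_distrib_left)
  also have "\<dots> \<le> (\<Sum>i<n. 8 * Z j i)"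
  proof (rule sum_mono)
    fix i assume i: "i \<in> {..<n}"
    have "norm (ys (Suc k) i - ys k i) \<le> 2/(real k+2) * (bt (Suc k) i + norm (ys k i))"
      using k i by (intro dy_step) auto
    then have "(norm (ys (Suc k) i - ys k i))\<^sup>2 \<le> (2/(real k+2) * (bt (Suc k) i + norm (ys k i)))\<^sup>2"
      by (intro power_mono) auto
    then have "(real k+2)\<^sup>2 * (norm (ys (Suc k) i - ys k i))\<^sup>2
        \<le> (real k+2)\<^sup>2 * (2/(real k+2) * (bt (Suc k) i + norm (ys k i)))\<^sup>2"
      by (intro mult_left_mono) auto
    also have "\<dots> = 4 * (bt (Suc k) i + norm (ys k i))\<^sup>2"
    proof -
      define X where "X = bt (Suc k) i + norm (ys k i)"
      have r: "(real k+2) * (2/(real k+2)) = 2"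
        by (subst times_divide_eq_right, rule nonzero_mult_div_cancel_left) simp
      have "(real k+2)\<^sup>2 * (2/(real k+2) * X)\<^sup>2 = ((real k+2) * (2/(real k+2)) * X)\<^sup>2"
        by (simp only: mult.assoc power_mult_distrib)
      also have "\<dots> = 4 * X\<^sup>2" unfolding r by (simp add: power2_eq_square)
      finally show ?thesis unfolding X_def .
    qed
    also have "\<dots> \<le> 4 * (2 * ((bt (Suc k) i)\<^sup>2 + (norm (ys k i))\<^sup>2))"
      by (intro mult_left_mono sq_add2) auto
    also have "\<dots> \<le> 8 * Z j i"
      using ysq[OF k, of i] i jk by (simp add: Z_def)
    finally show "(real k+2)\<^sup>2 * (norm (ys (Suc k) i - ys k i))\<^sup>2 \<le> 8 * Z j i" .
  qed
  finally show ?thesis by (simp add: sum_distrib_left)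
qed

lemma avg_ss: "1 \<le> k \<Longrightarrow> avg n (ss k) = avg n (ys k)"
proof (induct k rule: nat_induct_at_least)
  case base then show ?case by (simp only: one(3))
next
  case (Suc k)
  show ?case unfolding ss_Suc[OF Suc(1)] avg_add avg_diff avg_mix[OF c_col] Suc(2) by simp
qed

definition "e k = nm n (\<lambda>i. ss k i - avg n (ss k))"

lemma e_rec: assumes k: "1 \<le> k" shows "e (Suc k) \<le> l * e k + d (Suc k)"
proof -
  define D' where "D' = (\<lambda>i. ys (Suc k) i - ys k i)"
  have av: "avg n (\<lambda>i. mix n c (ss k) i + D' i) = avg n (ss k) + avg n D'"
    unfolding avg_add avg_mix[OF c_col] ..
  have ss': "ss (Suc k) = (\<lambda>i. mix n c (ss k) i + D' i)" using ss_Suc[OF k] by (simp add: D'_def)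
  have dv: "(\<lambda>i. ss (Suc k) i - avg n (ss (Suc k))) = (\<lambda>i. (mix n c (ss k) i - avg n (ss k)) + (D' i - avg n D'))"
    unfolding ss' av by (simp add: algebra_simps)
  have "e (Suc k) \<le> nm n (\<lambda>i. mix n c (ss k) i - avg n (ss k)) + nm n (\<lambda>i. D' i - avg n D')"
    unfolding e_def dv by (rule nm_triangle)
  moreover have "nm n (\<lambda>i. mix n c (ss k) i - avg n (ss k)) \<le> l * e k" unfolding e_def by (rule contr)
  moreover have "nm n (\<lambda>i. D' i - avg n D') \<le> nm n D'" by (rule dev_le)
  moreover have "nm n D' = d (Suc k)" using k by (simp add: d_def D'_def)
  ultimately show ?thesis by linarith
qed

lemma e_conv: "1 \<le> k \<Longrightarrow> e k \<le> (\<Sum>j\<in>{1..k}. l^(k-j) * d j)"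
proof (induct k rule: nat_induct_at_least)
  case base
  have "e 1 \<le> nm n (ss 1)" unfolding e_def by (rule dev_le)
  moreover have "d 1 = nm n (ss 1)" unfolding d_def one(3) by simp
  ultimately show ?case by simp
next
  case (Suc k)
  have "e (Suc k) \<le> l * e k + d (Suc k)" using Suc(1) by (rule e_rec)
  also have "\<dots> \<le> l * (\<Sum>j\<in>{1..k}. l^(k-j) * d j) + d (Suc k)"
    using Suc(2) l0 by (intro add_right_mono mult_left_mono) auto
  finally show ?case by (simp only: conv_Suc)
qed

lemma e0: "0 \<le> e k" unfolding e_def by (rule nm_nonneg)
lemma d0: "0 \<le> d j" unfolding d_def by (simp add: nm_nonneg)

lemma pathwise:
  assumes k: "1 \<le> k" and i: "i < n"
  shows "(norm (mix n c (ss k) i - avg n (ys k)))\<^sup>2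
    \<le> (\<Sum>j\<in>{1..k}. l^(k-j) * (1/(real j+1)\<^sup>2)) * (\<Sum>j\<in>{1..k}. l^(k-j) * (8 * (\<Sum>i<n. Z j i)))"
proof -
  have "norm (mix n c (ss k) i - avg n (ys k)) \<le> nm n (\<lambda>i. mix n c (ss k) i - avg n (ss k))"
    unfolding avg_ss[OF k] using i by (rule nm_comp)
  also have "\<dots> \<le> l * e k" unfolding e_def by (rule contr)
  also have "\<dots> \<le> 1 * e k" using l1 e0 by (intro mult_right_mono) auto
  also have "\<dots> \<le> (\<Sum>j\<in>{1..k}. l^(k-j) * d j)" using e_conv[OF k] by simp
  finally have a: "norm (mix n c (ss k) i - avg n (ys k)) \<le> (\<Sum>j\<in>{1..k}. l^(k-j) * d j)" .
  have "(norm (mix n c (ss k) i - avg n (ys k)))\<^sup>2 \<le> (\<Sum>j\<in>{1..k}. l^(k-j) * d j)\<^sup>2"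
    using a by (intro power_mono) auto
  also have "(\<Sum>j\<in>{1..k}. l^(k-j) * d j) = (\<Sum>j\<in>{1..k}. (sqrt (l^(k-j)) / (real j+1)) * (sqrt (l^(k-j)) * (real j+1) * d j))"
  proof (rule sum.cong)
    fix j assume "j \<in> {1..k}"
    have h: "sqrt (l^(k-j)) * sqrt (l^(k-j)) = l^(k-j)" using l0 by simp
    have x: "real j + 1 \<noteq> 0" by simp
    have "(sqrt (l^(k-j)) / (real j+1)) * (sqrt (l^(k-j)) * (real j+1) * d j) = (sqrt (l^(k-j)) * sqrt (l^(k-j))) * d j"
      by (rule aux_cs[OF x])
    then show "l^(k-j) * d j = (sqrt (l^(k-j)) / (real j+1)) * (sqrt (l^(k-j)) * (real j+1) * d j)"
      unfolding h by (rule sym)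
  qed simp
  also have "(\<dots>)\<^sup>2 \<le> (\<Sum>j\<in>{1..k}. (sqrt (l^(k-j)) / (real j+1))\<^sup>2) * (\<Sum>j\<in>{1..k}. (sqrt (l^(k-j)) * (real j+1) * d j)\<^sup>2)"
    by (rule Cauchy_Schwarz_ineq_sum)
  also have "(\<Sum>j\<in>{1..k}. (sqrt (l^(k-j)) / (real j+1))\<^sup>2) = (\<Sum>j\<in>{1..k}. l^(k-j) * (1/(real j+1)\<^sup>2))"
    using l0 by (intro sum.cong) (auto simp: power_divide)
  finally have fin: "(norm (mix n c (ss k) i - avg n (ys k)))\<^sup>2 \<le> (\<Sum>j\<in>{1..k}. l^(k-j) * (1/(real j+1)\<^sup>2)) * (\<Sum>j\<in>{1..k}. (sqrt (l^(k-j)) * (real j+1) * d j)\<^sup>2)" .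
  have hS: "(\<Sum>j\<in>{1..k}. (sqrt (l^(k-j)) * (real j+1) * d j)\<^sup>2) \<le> (\<Sum>j\<in>{1..k}. l^(k-j) * (8 * (\<Sum>i<n. Z j i)))"
  proof (rule sum_mono)
    fix j assume j: "j \<in> {1..k}"
    have "(sqrt (l^(k-j)) * (real j+1) * d j)\<^sup>2 = l^(k-j) * ((real j+1)\<^sup>2 * (d j)\<^sup>2)"
      using l0 by (simp add: power_mult_distrib)
    also have "\<dots> \<le> l^(k-j) * (8 * (\<Sum>i<n. Z j i))" using dZ[of j] j l0 by (intro mult_left_mono) auto
    finally show "(sqrt (l^(k-j)) * (real j+1) * d j)\<^sup>2 \<le> l^(k-j) * (8 * (\<Sum>i<n. Z j i))" .
  qed
  have S0: "0 \<le> (\<Sum>j\<in>{1..k}. l^(k-j) * (1/(real j+1)\<^sup>2))" using l0 by (intro sum_nonneg) auto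
  show ?thesis using fin mult_left_mono[OF hS S0] by linarith
qed

end

lemma nn_lin2:
  fixes f h :: "'a \<Rightarrow> real"
  assumes fm: "f \<in> borel_measurable M" and hm: "h \<in> borel_measurable M"
    and a: "0 \<le> a" and b: "0 \<le> b" and f0: "\<And>x. 0 \<le> f x" and h0: "\<And>x. 0 \<le> h x"
    and fi: "(\<integral>\<^sup>+ x. ennreal (f x) \<partial>M) \<le> ennreal r" and hi: "(\<integral>\<^sup>+ x. ennreal (h x) \<partial>M) \<le> ennreal s"
    and r: "0 \<le> r" and s: "0 \<le> s"
  shows "integral\<^sup>N M (\<lambda>x. ennreal (a * f x + b * h x)) \<le> ennreal (a * r + b * s)"
proof -
  have "(\<integral>\<^sup>+ x. ennreal (a * f x + b * h x) \<partial>M) = (\<integral>\<^sup>+ x. ennreal a * ennreal (f x) + ennreal b * ennreal (h x) \<partial>M)"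
    using a b f0 h0 by (intro nn_integral_cong) (simp add: ennreal_mult)
  also have "\<dots> = ennreal a * (\<integral>\<^sup>+ x. ennreal (f x) \<partial>M) + ennreal b * (\<integral>\<^sup>+ x. ennreal (h x) \<partial>M)"
    using fm hm by (simp add: nn_integral_add nn_integral_cmult)
  also have "\<dots> \<le> ennreal a * ennreal r + ennreal b * ennreal s"
    using fi hi by (intro add_mono mult_left_mono) auto
  also have "\<dots> = ennreal (a * r + b * s)" using a b r s by (simp add: ennreal_mult)
  finally show ?thesis .
qed

lemma nn_cmult:
  fixes f :: "'a \<Rightarrow> real"
  assumes fm: "f \<in> borel_measurable M" and a: "0 \<le> a" and f0: "\<And>x. 0 \<le> f x"
    and fi: "(\<integral>\<^sup>+ x. ennreal (f x) \<partial>M) \<le> ennreal r" and r: "0 \<le> r"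
  shows "(\<integral>\<^sup>+ x. ennreal (a * f x) \<partial>M) \<le> ennreal (a * r)"
  using nn_lin2[OF fm fm a order_refl f0 f0 fi fi r r] by simp

lemma nn_sum:
  fixes f :: "'t \<Rightarrow> 'a \<Rightarrow> real"
  assumes A: "finite A" and fm: "\<And>t. t \<in> A \<Longrightarrow> f t \<in> borel_measurable M"
    and f0: "\<And>t x. t \<in> A \<Longrightarrow> 0 \<le> f t x"
    and fi: "\<And>t. t \<in> A \<Longrightarrow> (\<integral>\<^sup>+ x. ennreal (f t x) \<partial>M) \<le> ennreal (r t)"
    and r: "\<And>t. t \<in> A \<Longrightarrow> 0 \<le> r t"
  shows "(\<integral>\<^sup>+ x. ennreal (\<Sum>t\<in>A. f t x) \<partial>M) \<le> ennreal (\<Sum>t\<in>A. r t)"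
proof -
  have "(\<integral>\<^sup>+ x. ennreal (\<Sum>t\<in>A. f t x) \<partial>M) = (\<integral>\<^sup>+ x. (\<Sum>t\<in>A. ennreal (f t x)) \<partial>M)"
    using f0 by (intro nn_integral_cong) (simp add: sum_ennreal)
  also have "\<dots> = (\<Sum>t\<in>A. (\<integral>\<^sup>+ x. ennreal (f t x) \<partial>M))"
    using fm by (intro nn_integral_sum) auto
  also have "\<dots> \<le> (\<Sum>t\<in>A. ennreal (r t))" using fi by (intro sum_mono) auto
  also have "\<dots> = ennreal (\<Sum>t\<in>A. r t)" using r by (simp add: sum_ennreal)
  finally show ?thesis .
qed

lemma Yb_nonneg: "0 \<le> Yb b j i"
proof (induction j)
  case 0 then show ?case by simp
next
  case (Suc j)
  have "2/(real j+2) \<le> 1" by simp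
  then show ?case using Suc by simp
qed

lemma Yb_meas:
  assumes "\<And>j. 1 \<le> j \<Longrightarrow> (\<lambda>x. bw x j i) \<in> borel_measurable M"
  shows "(\<lambda>x. Yb (bw x) j i) \<in> borel_measurable M"
proof (induction j)
  case 0 then show ?case by simp
next
  case (Suc j)
  have m: "(\<lambda>x. bw x (Suc j) i) \<in> borel_measurable M" by (rule assms) simp
  show ?case using Suc m by simp
qed

lemma Yb_int:
  fixes M :: "'a measure"
  assumes m: "\<And>j. 1 \<le> j \<Longrightarrow> (\<lambda>x. bw x j i) \<in> borel_measurable M"
    and bi: "\<And>j. 1 \<le> j \<Longrightarrow> (\<integral>\<^sup>+ x. ennreal ((bw x j i)\<^sup>2) \<partial>M) \<le> ennreal V"
    and V: "0 \<le> V"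
  shows "(\<integral>\<^sup>+ x. ennreal (Yb (bw x) j i) \<partial>M) \<le> ennreal V"
proof (induction j)
  case 0 then show ?case by simp
next
  case (Suc j)
  have g1: "2/(real j+2) \<le> 1" by simp
  have "(\<integral>\<^sup>+ x. ennreal ((1 - 2/(real j + 2)) * Yb (bw x) j i + 2/(real j + 2) * (bw x (Suc j) i)\<^sup>2) \<partial>M)
      \<le> ennreal ((1 - 2/(real j + 2)) * V + 2/(real j + 2) * V)"
    using g1 Suc bi[of "Suc j"] V m[of "Suc j"]
    by (intro nn_lin2 Yb_meas m) (auto simp: Yb_nonneg)
  then show ?case by (simp add: algebra_simps)
qed

lemma g_pt_meas:
  assumes "(\<lambda>(x, s). g x s) \<in> borel_measurable (borel \<Otimes>\<^sub>M S)"
  shows "(\<lambda>s. g z s) \<in> borel_measurable S"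
proof -
  have 1: "(\<lambda>s. (z, s)) \<in> measurable S (borel \<Otimes>\<^sub>M S)"
    by (rule measurable_Pair) auto
  have "(\<lambda>s. (\<lambda>(x, s). g x s) (z, s)) \<in> borel_measurable S" by (rule measurable_compose[OF 1 assms])
  then show ?thesis by simp
qed

lemma sq_add2': "((a::real) + b)\<^sup>2 \<le> 2*(a\<^sup>2 + b\<^sup>2)"
proof -
  have "0 \<le> (a-b)\<^sup>2" by simp
  then show ?thesis by (simp add: power2_eq_square algebra_simps)
qed

lemma k0_prop:
  assumes "\<bar>lam\<bar> < 1"
  shows "0 < k0_of lam \<and> \<bar>lam\<bar> \<le> (real (k0_of lam)/(real (k0_of lam)+1))\<^sup>2"
proof -
  obtain m :: nat where m: "2/(1 - \<bar>lam\<bar>) < real m" using reals_Archimedean2 by blast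
  have p: "0 < 1 - \<bar>lam\<bar>" using assms by simp
  have "0 < 2/(1 - \<bar>lam\<bar>)" using p by simp
  then have "0 < real m" using m by linarith
  then have m0: "0 < m" by simp
  define t where "t = 1/(real m+1)"
  have "2 < (1 - \<bar>lam\<bar>) * (real m + 1)"
  proof -
    have "2 < (1 - \<bar>lam\<bar>) * real m" using m p by (simp add: field_simps)
    also have "\<dots> \<le> (1 - \<bar>lam\<bar>) * (real m + 1)" using p by (intro mult_left_mono) auto
    finally show ?thesis .
  qed
  then have t2: "2*t < 1 - \<bar>lam\<bar>" by (simp add: t_def field_simps)
  have r: "real m/(real m+1) = 1 - t" by (simp add: t_def field_simps)
  have "1 - 2*t \<le> (1-t)\<^sup>2" by (simp add: power2_eq_square algebra_simps)
  then have P: "0 < m \<and> \<bar>lam\<bar> \<le> (real m/(real m+1))\<^sup>2" using t2 r m0 by simp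
  show ?thesis unfolding k0_of_def by (rule LeastI[of _ m]) (rule P)
qed

lemma pow_bound:
  assumes "2 \<le> n" "1 \<le> k"
  shows "2 * (real k + 1) \<le> (4 * real n)^k"
  using assms(2)
proof (induct k rule: nat_induct_at_least)
  case base then show ?case using assms(1) by simp
next
  case (Suc k)
  have "2 * (real (Suc k) + 1) \<le> 4 * (2 * (real k + 1))" by simp
  also have "\<dots> \<le> (4 * real n) * (4 * real n)^k"
    using Suc(2) assms(1) by (intro mult_mono) auto
  finally show ?case by simp
qed

lemma final_arith:
  fixes lam G L D Kc C1 C2 \<psi> \<psi>h :: real and k0 n k :: nat
  assumes k0: "1 \<le> k0" and lk: "\<bar>lam\<bar> \<le> (real k0/(real k0+1))\<^sup>2" and n2: "2 \<le> n" and k: "1 \<le> k"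
    and L0: "0 \<le> L" and D0: "0 \<le> D" and G0: "0 < G"
    and Kc: "Kc = L*D + L*(2*D + 2*(2*(real k0+1)*(sqrt (real n)*D)))/2"
    and C1: "C1 = real k0 * sqrt (real n) * D"
    and ps: "2 * G + 2 * L * (D + 2 * C1) \<le> \<psi>"
    and psh: "4 * L * (D + 2 * C1) * \<psi> + 4 * G * \<psi> + 8 * G\<^sup>2 + 8 * L\<^sup>2 * (D + 2 * C1)\<^sup>2 \<le> \<psi>h"
    and C2: "C2 = real k0 ^ 3 * (4 * real n) ^ k0 * real n * (12 * L\<^sup>2 * (D + 2 * C1)\<^sup>2 + 12 * (G\<^sup>2 + \<psi>h))"
  shows "(\<Sum>j\<in>{1..k}. \<bar>lam\<bar>^(k-j) * (1/(real j+1)\<^sup>2)) * (\<Sum>j\<in>{1..k}. \<bar>lam\<bar>^(k-j) * (8 * (\<Sum>i<n. 2*(2*G\<^sup>2 + 2*Kc\<^sup>2))))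
      \<le> 4*C2/(real k+2)\<^sup>2"
proof -
  define l where "l = \<bar>lam\<bar>"
  define V where "V = 2*G\<^sup>2 + 2*Kc\<^sup>2"
  define W where "W = G\<^sup>2 + L\<^sup>2*(D+2*C1)\<^sup>2"
  define S1 where "S1 = (\<Sum>j\<in>{1..k}. l^(k-j) * (1/(real j+1)\<^sup>2))"
  have l0: "0 \<le> l" by (simp add: l_def)
  have V0: "0 \<le> V" by (simp add: V_def)
  have W0: "0 \<le> W" by (simp add: W_def)
  have C10: "0 \<le> C1" using C1 D0 by simp
  have S1b: "S1 \<le> 6*real k0^3/(real k+2)\<^sup>2"
    unfolding S1_def using l0 lk k0 k by (intro Tsum_bound) (auto simp: l_def)
  have S10: "0 \<le> S1" unfolding S1_def using l0 by (intro sum_nonneg) auto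
  have e1: "(\<Sum>j\<in>{1..k}. l^(k-j) * (8 * (\<Sum>i<n. 2*V))) = (\<Sum>j\<in>{1..k}. l^(k-j) * 1) * (16 * real n * V)"
    by (simp add: sum_distrib_right mult.assoc)
  have g: "(\<Sum>j\<in>{1..k}. l^(k-j) * 1) \<le> real k0 + 1"
    using l0 lk k0 by (intro geo_bound) (auto simp: l_def)
  have e2: "(\<Sum>j\<in>{1..k}. l^(k-j) * (8 * (\<Sum>i<n. 2*V))) \<le> (real k0 + 1) * (16 * real n * V)"
    unfolding e1 using g V0 by (intro mult_right_mono) auto
  have KcE: "Kc = L * (2*D + 2*(real k0+1)* sqrt (real n)*D)" using Kc by (simp add: algebra_simps)
  have Kc0: "0 \<le> Kc" unfolding KcE using L0 D0 by simp
  have Kcb: "Kc \<le> 2*L*(D+2*C1)"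
  proof -
    have "2*(real k0+1)* sqrt (real n)*D \<le> 4*C1"
    proof -
      have "2*(real k0+1) \<le> 4 * real k0" using k0 by simp
      then have "2*(real k0+1)*(sqrt (real n)*D) \<le> 4 * real k0 * (sqrt (real n)*D)"
        using D0 by (intro mult_right_mono) auto
      then show ?thesis using C1 by (simp add: mult.assoc)
    qed
    then have "L * (2*D + 2*(real k0+1)* sqrt (real n)*D) \<le> L * (2*D + 4*C1)" using L0
      by (intro mult_left_mono) auto
    then show ?thesis unfolding KcE by (simp add: algebra_simps)
  qed
  have Kc2: "Kc\<^sup>2 \<le> 4*L\<^sup>2*(D+2*C1)\<^sup>2"
  proof -
    have "Kc\<^sup>2 \<le> (2*L*(D+2*C1))\<^sup>2" using Kcb Kc0 by (intro power_mono) auto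
    then show ?thesis by (simp add: power_mult_distrib)
  qed
  have VW: "V \<le> 8*W"
  proof -
    define X where "X = L\<^sup>2*(D+2*C1)\<^sup>2"
    have "0 \<le> G\<^sup>2" by simp
    moreover have "Kc\<^sup>2 \<le> 4*X" using Kc2 by (simp add: X_def mult.assoc)
    ultimately have a: "2*Kc\<^sup>2 \<le> 8*X" and b: "2*G\<^sup>2 \<le> 8*G\<^sup>2" by linarith+
    have "2*G\<^sup>2 + 2*Kc\<^sup>2 \<le> 8*G\<^sup>2 + 8*X" using add_mono[OF b a] .
    then show ?thesis unfolding V_def W_def X_def[symmetric] by (simp add: distrib_left)
  qed
  have ps0: "0 \<le> \<psi>"
  proof -
    have "0 \<le> 2*L*(D+2*C1)" using L0 D0 C10 by simp
    then show ?thesis using ps G0 by linarith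
  qed
  have psW: "8*W \<le> \<psi>h"
  proof -
    have h1: "0 \<le> 4 * L * (D + 2 * C1) * \<psi>" using L0 D0 C10 ps0 by simp
    have h2: "0 \<le> 4 * G * \<psi>" using G0 ps0 by simp
    have h3: "8*W = 8 * G\<^sup>2 + 8 * L\<^sup>2 * (D + 2 * C1)\<^sup>2" by (simp add: W_def algebra_simps)
    show ?thesis using psh h1 h2 h3 by linarith
  qed
  define A where "A = real k0^3 * real n * W"
  have A0: "0 \<le> A" unfolding A_def using W0 by simp
  have LHS: "S1 * (\<Sum>j\<in>{1..k}. l^(k-j) * (8 * (\<Sum>i<n. 2*V))) \<le> 768*(real k0+1)*A/(real k+2)\<^sup>2"
  proof -
    have "S1 * (\<Sum>j\<in>{1..k}. l^(k-j) * (8 * (\<Sum>i<n. 2*V))) \<le> (6*real k0^3/(real k+2)\<^sup>2) * ((real k0 + 1) * (16 * real n * V))"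
      using S1b e2 S10 V0 l0 by (intro mult_mono) (auto intro!: sum_nonneg)
    also have "\<dots> \<le> (6*real k0^3/(real k+2)\<^sup>2) * ((real k0 + 1) * (16 * real n * (8*W)))"
      using VW by (intro mult_left_mono) auto
    also have "\<dots> = 768*(real k0+1)*A/(real k+2)\<^sup>2" by (simp add: A_def)
    finally show ?thesis .
  qed
  have pb: "2*(real k0+1) \<le> (4*real n)^k0" using n2 k0 by (rule pow_bound)
  have "768*(real k0+1)*A \<le> 384*(4*real n)^k0*A"
  proof -
    have "768*(real k0+1) \<le> 384*(4*real n)^k0" using pb by simp
    then show ?thesis using A0 by (intro mult_right_mono) auto
  qed
  also have "\<dots> \<le> 432*(4*real n)^k0*A" using A0 by (intro mult_right_mono) auto
  also have "\<dots> \<le> 4*C2"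
  proof -
    have "12 * L\<^sup>2 * (D + 2 * C1)\<^sup>2 + 12 * (G\<^sup>2 + \<psi>h) \<ge> 108 * W"
      using psW unfolding W_def by simp
    then have "real k0 ^ 3 * (4 * real n) ^ k0 * real n * (108 * W) \<le> C2"
      unfolding C2 by (intro mult_left_mono) auto
    moreover have "432*(4*real n)^k0*A = 4*(real k0 ^ 3 * (4 * real n) ^ k0 * real n * (108 * W))"
      by (simp only: A_def mult_ac)
    ultimately show ?thesis by linarith
  qed
  finally have "768*(real k0+1)*A \<le> 4*C2" .
  then have "768*(real k0+1)*A/(real k+2)\<^sup>2 \<le> 4*C2/(real k+2)\<^sup>2" by (intro divide_right_mono) auto
  then show ?thesis using LHS unfolding S1_def V_def l_def by linarith
qed

theorem lemma2:
  fixes M :: "'a measure" and S :: "'b measure"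
    and n :: nat and c :: "nat \<Rightarrow> nat \<Rightarrow> real" and E :: "(nat \<times> nat) set"
    and X :: "'e::euclidean_space set" and D L \<delta> G :: real
    and f :: "nat \<Rightarrow> 'e \<Rightarrow> 'b \<Rightarrow> real" and g :: "nat \<Rightarrow> 'e \<Rightarrow> 'b \<Rightarrow> 'e"
    and \<xi>0 :: "nat \<Rightarrow> 'a \<Rightarrow> 'b" and \<xi> :: "nat \<Rightarrow> nat \<Rightarrow> 'a \<Rightarrow> 'b"
    and lmo :: "'e \<Rightarrow> 'e" and x1 :: "nat \<Rightarrow> 'e"
  defines "lam \<equiv> slem n c"
  defines "k0 \<equiv> k0_of lam"
  defines "gam \<equiv> (\<lambda>k::nat. 2 / (real k + 1))"
  defines "eta \<equiv> (\<lambda>k::nat. 2 / (real k + 2))"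
  defines "F \<equiv> (\<lambda>i x. prob_space.expectation M (\<lambda>\<omega>. f i x (\<xi>0 i \<omega>)))"
  defines "gradF \<equiv> (\<lambda>i x. prob_space.expectation M (\<lambda>\<omega>. g i x (\<xi>0 i \<omega>)))"
  defines "y \<equiv> (\<lambda>k i \<omega>. dmfw_y n c g lmo x1 gam eta (\<lambda>k' i'. \<xi> k' i' \<omega>) k i)"
  defines "p \<equiv> (\<lambda>k i \<omega>. dmfw_p n c g lmo x1 gam eta (\<lambda>k' i'. \<xi> k' i' \<omega>) k i)"
  defines "C1 \<equiv> real k0 * sqrt (real n) * D"
  defines "\<psi> \<equiv> max (Max ((\<lambda>i. prob_space.expectation M (\<lambda>\<omega>. norm (y 1 i \<omega>))) ` {..<n}))
                    (2 * G + 2 * L * (D + 2 * C1))"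
  defines "\<psi>h \<equiv> max (Max ((\<lambda>i. prob_space.expectation M (\<lambda>\<omega>. (norm (y 1 i \<omega>))\<^sup>2)) ` {..<n}))
                    (4 * L * (D + 2 * C1) * \<psi> + 4 * G * \<psi> + 8 * G\<^sup>2 + 8 * L\<^sup>2 * (D + 2 * C1)\<^sup>2)"
  defines "C2 \<equiv> real k0 ^ 3 * (4 * real n) ^ k0 * real n
                  * (12 * L\<^sup>2 * (D + 2 * C1)\<^sup>2 + 12 * (G\<^sup>2 + \<psi>h))"
  assumes M: "prob_space M"
  \<comment> \<open>communication graph on agents 0..n-1 (connected, undirected) and weight matrix\<close>
    and n2: "2 \<le> n"
    and E_sub: "E \<subseteq> {..<n} \<times> {..<n}"
    and E_sym: "sym E"
    and E_conn: "\<forall>i<n. \<forall>j<n. (i, j) \<in> E\<^sup>*"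
    and c_nonneg: "\<forall>i<n. \<forall>j<n. 0 \<le> c i j"
    and c_graph: "\<forall>i<n. \<forall>j<n. j \<noteq> i \<and> (i, j) \<notin> E \<longrightarrow> c i j = 0"
    and c_row: "\<forall>i<n. (\<Sum>j<n. c i j) = 1"
    and c_col: "\<forall>j<n. (\<Sum>i<n. c i j) = 1"
    and lam_lt1: "\<bar>lam\<bar> < 1"
    and contract: "\<forall>v :: nat \<Rightarrow> 'e.
        sqrt (\<Sum>i<n. (norm (mix n c v i - avg n v))\<^sup>2) \<le> \<bar>lam\<bar> * sqrt (\<Sum>i<n. (norm (v i - avg n v))\<^sup>2)"
  \<comment> \<open>constraint set\<close>
    and X_convex: "convex X" and X_compact: "compact X"
    and X_diam: "\<forall>x\<in>X. \<forall>x'\<in>X. norm (x - x') \<le> D"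
  \<comment> \<open>random variables: \<xi>0 i is \<xi>^i, \<xi> k i is the sample \<xi>_k^i\<close>
    and \<xi>0_meas: "\<forall>i<n. \<xi>0 i \<in> measurable M S"
    and \<xi>_meas: "\<forall>k\<ge>1. \<forall>i<n. \<xi> k i \<in> measurable M S"
    and \<xi>_distr: "\<forall>k\<ge>1. \<forall>i<n. distr M S (\<xi> k i) = distr M S (\<xi>0 i)"
    and \<xi>_indep: "prob_space.indep_vars M (\<lambda>_. S) (\<lambda>(k, i). \<xi> k i) ({1..} \<times> {..<n})"
  \<comment> \<open>sample functions and their gradients\<close>
    and g_meas: "\<forall>i<n. (\<lambda>(x, s). g i x s) \<in> borel_measurable (borel \<Otimes>\<^sub>M S)"
    and f_grad: "\<forall>i<n. \<forall>s\<in>space S. \<forall>x.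
        ((\<lambda>z. f i z s) has_derivative (\<lambda>h. g i x s \<bullet> h)) (at x)"
    and g_lip: "\<forall>i<n. \<forall>s\<in>space S. \<forall>x x'. norm (g i x s - g i x' s) \<le> L * norm (x - x')"
    and f_int: "\<forall>i<n. \<forall>x. integrable M (\<lambda>\<omega>. f i x (\<xi>0 i \<omega>))"
    and g_int: "\<forall>i<n. \<forall>x. integrable M (\<lambda>\<omega>. g i x (\<xi>0 i \<omega>))"
    and F_grad: "\<forall>i<n. \<forall>x. (F i has_derivative (\<lambda>h. gradF i x \<bullet> h)) (at x)"
    and gradF_lip: "\<forall>i<n. \<forall>x x'. norm (gradF i x - gradF i x') \<le> L * norm (x - x')"
    and var_bound: "\<forall>i<n. \<forall>x\<in>X.
        integrable M (\<lambda>\<omega>. (norm (gradF i x - g i x (\<xi>0 i \<omega>)))\<^sup>2) \<and>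
        prob_space.expectation M (\<lambda>\<omega>. (norm (gradF i x - g i x (\<xi>0 i \<omega>)))\<^sup>2) \<le> \<delta>\<^sup>2"
    and G_pos: "0 < G"
    and G_bound2: "\<forall>i<n. \<forall>x\<in>X.
        integrable M (\<lambda>\<omega>. (norm (g i x (\<xi>0 i \<omega>)))\<^sup>2) \<and>
        prob_space.expectation M (\<lambda>\<omega>. (norm (g i x (\<xi>0 i \<omega>)))\<^sup>2) \<le> G\<^sup>2"
    and G_bound1: "\<forall>i<n. \<forall>x\<in>X. prob_space.expectation M (\<lambda>\<omega>. norm (g i x (\<xi>0 i \<omega>))) \<le> G"
  \<comment> \<open>linear minimisation oracle: a (measurable) selection of argmin_{phi in X} <p, phi>\<close>
    and lmo_meas: "lmo \<in> borel_measurable borel"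
    and lmo_in: "\<forall>q. lmo q \<in> X"
    and lmo_min: "\<forall>q. \<forall>\<phi>\<in>X. q \<bullet> lmo q \<le> q \<bullet> \<phi>"
  \<comment> \<open>deterministic initial points\<close>
    and x1_in: "\<forall>i<n. x1 i \<in> X"
  shows "\<forall>i<n. \<forall>k\<ge>1.
      (\<integral>\<^sup>+ \<omega>. ennreal ((norm (p k i \<omega> - avg n (\<lambda>j. y k j \<omega>)))\<^sup>2) \<partial>M)
        \<le> ennreal (4 * C2 / (real k + 2)\<^sup>2)"
proof (intro allI impI)
  fix i k :: nat assume i: "i < n" and k: "1 \<le> k"
  interpret P: prob_space M by (rule M)
  have n0: "0 < n" using n2 by simp
  have kp: "0 < k0 \<and> \<bar>lam\<bar> \<le> (real k0/(real k0+1))\<^sup>2" unfolding k0_def by (rule k0_prop[OF lam_lt1])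
  then have k0: "1 \<le> k0" and lk: "\<bar>lam\<bar> \<le> (real k0/(real k0+1))\<^sup>2" by auto
  have D0: "0 \<le> D"
  proof -
    have "norm (lmo 0 - lmo 0) \<le> D" by (rule X_diam[rule_format, OF lmo_in[rule_format] lmo_in[rule_format]])
    then show ?thesis by simp
  qed
  obtain \<omega>0 where \<omega>0: "\<omega>0 \<in> space M" using P.not_empty by auto
  have L0: "0 \<le> L"
  proof -
    have s: "\<xi>0 0 \<omega>0 \<in> space S" by (rule measurable_space[OF \<xi>0_meas[rule_format, OF n0] \<omega>0])
    obtain b :: 'e where b: "b \<in> Basis" using nonempty_Basis by blast
    have "norm (g 0 0 (\<xi>0 0 \<omega>0) - g 0 b (\<xi>0 0 \<omega>0)) \<le> L * norm (0 - b)" by (rule g_lip[rule_format, OF n0 s])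
    moreover have "norm (0 - b) = 1" using b by simp
    ultimately have "norm (g 0 0 (\<xi>0 0 \<omega>0) - g 0 b (\<xi>0 0 \<omega>0)) \<le> L" by simp
    then show ?thesis by (rule order_trans[OF norm_ge_zero])
  qed
  define Kc where "Kc = L*D + L*(2*D + 2*(2*(real k0+1)*(sqrt (real n)*D)))/2"
  define bw where "bw = (\<lambda>\<omega> j i. norm (g i (x1 i) (\<xi> j i \<omega>)) + Kc)"
  define Zw where "Zw = (\<lambda>\<omega> j i. (bw \<omega> j i)\<^sup>2 + Yb (bw \<omega>) (j-1) i)"
  define Sk where "Sk = (\<Sum>j\<in>{1..k}. \<bar>lam\<bar>^(k-j) * (1/(real j+1)\<^sup>2))"
  define R where "R = (\<lambda>\<omega>. Sk * (\<Sum>j\<in>{1..k}. \<bar>lam\<bar>^(k-j) * (8 * (\<Sum>i<n. Zw \<omega> j i))))"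
  have path: "(norm (p k i \<omega> - avg n (\<lambda>j. y k j \<omega>)))\<^sup>2 \<le> R \<omega>" if \<omega>: "\<omega> \<in> space M" for \<omega>
  proof -
    interpret Dm: dm n c g lmo x1 "\<lambda>k' i'. \<xi> k' i' \<omega>" X "space S" D L "\<bar>lam\<bar>" k0
    proof unfold_locales
      show "\<And>v::nat \<Rightarrow> 'e. nm n (\<lambda>i. mix n c v i - avg n v) \<le> \<bar>lam\<bar> * nm n (\<lambda>i. v i - avg n v)"
        unfolding nm_def by (rule contract[rule_format])
      show "\<And>k i. 1 \<le> k \<Longrightarrow> i < n \<Longrightarrow> \<xi> k i \<omega> \<in> space S"
        by (rule measurable_space[OF \<xi>_meas[rule_format] \<omega>])
      show "0 < n" by (rule n0)
      show "\<forall>i<n. \<forall>j<n. 0 \<le> c i j" by (rule c_nonneg)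
      show "\<forall>i<n. (\<Sum>j<n. c i j) = 1" by (rule c_row)
      show "\<forall>j<n. (\<Sum>i<n. c i j) = 1" by (rule c_col)
      show "0 \<le> \<bar>lam\<bar>" by simp
      show "\<bar>lam\<bar> \<le> (real k0/(real k0+1))\<^sup>2" by (rule lk)
      show "1 \<le> k0" by (rule k0)
      show "convex X" by (rule X_convex)
      show "\<forall>x\<in>X. \<forall>x'\<in>X. norm (x - x') \<le> D" by (rule X_diam)
      show "\<forall>q. lmo q \<in> X" by (rule lmo_in)
      show "\<forall>i<n. x1 i \<in> X" by (rule x1_in)
      show "\<forall>i<n. \<forall>s\<in>space S. \<forall>x x'. norm (g i x s - g i x' s) \<le> L * norm (x - x')" by (rule g_lip)
      show "0 \<le> L" by (rule L0)
      show "0 \<le> D" by (rule D0)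
    qed
    have bt: "Dm.bt = bw \<omega>"
      by (intro ext) (simp add: Dm.bt_def bw_def Dm.K_def Dm.Q_def Dm.B_def Kc_def)
    have Z: "Dm.Z = Zw \<omega>" by (intro ext) (simp add: Dm.Z_def Zw_def bt)
    have pe: "p k i \<omega> = mix n c (Dm.ss k) i" by (simp add: p_def Dm.ss_def gam_def eta_def dmfw_p_def)
    have ye: "(\<lambda>j. y k j \<omega>) = Dm.ys k" by (simp add: y_def Dm.ys_def gam_def eta_def)
    show ?thesis using Dm.pathwise[OF k i] unfolding pe ye R_def Sk_def Z by simp
  qed
  define V where "V = 2*G\<^sup>2 + 2*Kc\<^sup>2"
  have V0: "0 \<le> V" by (simp add: V_def)
  have gpt: "(\<lambda>s. g i' (x1 i') s) \<in> borel_measurable S" if "i' < n" for i'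
    using g_pt_meas[of "g i'" S "x1 i'"] g_meas that by auto
  have Fm: "(\<lambda>s. (norm (g i' (x1 i') s))\<^sup>2) \<in> borel_measurable S" if "i' < n" for i'
    using gpt[OF that] by simp
  have gm: "(\<lambda>\<omega>. g i' (x1 i') (\<xi> j i' \<omega>)) \<in> borel_measurable M" if "1 \<le> j" "i' < n" for j i'
    by (rule measurable_compose[OF \<xi>_meas[rule_format, OF that] gpt[OF that(2)]])
  have bm: "(\<lambda>\<omega>. bw \<omega> j i') \<in> borel_measurable M" if "1 \<le> j" "i' < n" for j i'
    using gm[OF that] by (simp add: bw_def)
  have fm: "(\<lambda>\<omega>. (norm (g i' (x1 i') (\<xi> j i' \<omega>)))\<^sup>2) \<in> borel_measurable M" if "1 \<le> j" "i' < n" for j i'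
    using gm[OF that] by simp
  have Ef: "(\<integral>\<^sup>+ \<omega>. ennreal ((norm (g i' (x1 i') (\<xi> j i' \<omega>)))\<^sup>2) \<partial>M) \<le> ennreal (G\<^sup>2)"
    if j: "1 \<le> j" and i': "i' < n" for j i'
  proof -
    have Fm': "(\<lambda>s. ennreal ((norm (g i' (x1 i') s))\<^sup>2)) \<in> borel_measurable S" using Fm[OF i'] by simp
    have "(\<integral>\<^sup>+ \<omega>. ennreal ((norm (g i' (x1 i') (\<xi> j i' \<omega>)))\<^sup>2) \<partial>M)
        = (\<integral>\<^sup>+ s. ennreal ((norm (g i' (x1 i') s))\<^sup>2) \<partial>distr M S (\<xi> j i'))"
      by (rule nn_integral_distr[symmetric]) (use \<xi>_meas j i' Fm' in auto)
    also have "\<dots> = (\<integral>\<^sup>+ s. ennreal ((norm (g i' (x1 i') s))\<^sup>2) \<partial>distr M S (\<xi>0 i'))"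
      using \<xi>_distr j i' by simp
    also have "\<dots> = (\<integral>\<^sup>+ \<omega>. ennreal ((norm (g i' (x1 i') (\<xi>0 i' \<omega>)))\<^sup>2) \<partial>M)"
      by (rule nn_integral_distr) (use \<xi>0_meas i' Fm' in auto)
    also have "\<dots> = ennreal (\<integral>\<omega>. (norm (g i' (x1 i') (\<xi>0 i' \<omega>)))\<^sup>2 \<partial>M)"
      by (rule nn_integral_eq_integral) (use G_bound2 x1_in i' in auto)
    also have "\<dots> \<le> ennreal (G\<^sup>2)" using G_bound2 x1_in i' by (intro ennreal_leI) auto
    finally show ?thesis .
  qed
  have bi: "(\<integral>\<^sup>+ \<omega>. ennreal ((bw \<omega> j i')\<^sup>2) \<partial>M) \<le> ennreal V" if j: "1 \<le> j" and i': "i' < n" for j i'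
  proof -
    have "(\<integral>\<^sup>+ \<omega>. ennreal ((bw \<omega> j i')\<^sup>2) \<partial>M)
        \<le> (\<integral>\<^sup>+ \<omega>. ennreal (2 * (norm (g i' (x1 i') (\<xi> j i' \<omega>)))\<^sup>2 + (2*Kc\<^sup>2) * 1) \<partial>M)"
    proof (intro nn_integral_mono ennreal_leI)
      fix \<omega>
      show "(bw \<omega> j i')\<^sup>2 \<le> 2 * (norm (g i' (x1 i') (\<xi> j i' \<omega>)))\<^sup>2 + (2*Kc\<^sup>2) * 1"
        using sq_add2'[of "norm (g i' (x1 i') (\<xi> j i' \<omega>))" Kc] by (simp add: bw_def)
    qed
    also have "\<dots> \<le> ennreal (2 * G\<^sup>2 + (2*Kc\<^sup>2) * 1)"
      by (rule nn_lin2) (use fm[OF j i'] Ef[OF j i'] P.emeasure_space_1 in auto)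
    finally show ?thesis by (simp add: V_def)
  qed
  have Zw0: "0 \<le> Zw \<omega> j i'" for \<omega> j i' by (simp add: Zw_def Yb_nonneg)
  have Zm: "(\<lambda>\<omega>. Zw \<omega> j i') \<in> borel_measurable M" if j: "1 \<le> j" and i': "i' < n" for j i'
  proof -
    have "(\<lambda>\<omega>. Yb (bw \<omega>) (j-1) i') \<in> borel_measurable M" by (rule Yb_meas) (rule bm, auto simp: i')
    then show ?thesis using bm[OF j i'] by (simp add: Zw_def)
  qed
  have Zint: "(\<integral>\<^sup>+ \<omega>. ennreal (Zw \<omega> j i') \<partial>M) \<le> ennreal (1*V + 1*V)" if j: "1 \<le> j" and i': "i' < n" for j i'
  proof -
    have Y: "(\<integral>\<^sup>+ \<omega>. ennreal (Yb (bw \<omega>) (j-1) i') \<partial>M) \<le> ennreal V"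
      by (rule Yb_int[OF bm bi V0]) (auto simp: i')
    have "(\<integral>\<^sup>+ \<omega>. ennreal (1 * (bw \<omega> j i')\<^sup>2 + 1 * Yb (bw \<omega>) (j-1) i') \<partial>M) \<le> ennreal (1*V + 1*V)"
      by (rule nn_lin2) (use bm[OF j i'] Yb_meas[of bw i' M "j-1"] bm i' bi[OF j i'] Y V0 in \<open>auto simp: Yb_nonneg\<close>)
    then show ?thesis by (simp add: Zw_def)
  qed
  have s1: "(\<integral>\<^sup>+ \<omega>. ennreal (\<Sum>i<n. Zw \<omega> j i) \<partial>M) \<le> ennreal (\<Sum>i<n. 1*V + 1*V)" if j: "1 \<le> j" for j
    by (rule nn_sum) (use Zm[OF j] Zw0 Zint[OF j] V0 in auto)
  have s2: "(\<integral>\<^sup>+ \<omega>. ennreal (\<bar>lam\<bar>^(k-j) * (8 * (\<Sum>i<n. Zw \<omega> j i))) \<partial>M)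
      \<le> ennreal (\<bar>lam\<bar>^(k-j) * (8 * (\<Sum>i<n. 1*V + 1*V)))" if j: "1 \<le> j" for j
  proof (rule nn_cmult)
    show "(\<lambda>\<omega>. 8 * (\<Sum>i<n. Zw \<omega> j i)) \<in> borel_measurable M" using Zm[OF j] by simp
    show "(\<integral>\<^sup>+ \<omega>. ennreal (8 * (\<Sum>i<n. Zw \<omega> j i)) \<partial>M) \<le> ennreal (8 * (\<Sum>i<n. 1*V + 1*V))"
      by (rule nn_cmult) (use Zm[OF j] Zw0 s1[OF j] V0 in \<open>auto intro!: sum_nonneg\<close>)
  qed (use Zw0 V0 in \<open>auto intro!: sum_nonneg\<close>)
  have s3: "(\<integral>\<^sup>+ \<omega>. ennreal (\<Sum>j\<in>{1..k}. \<bar>lam\<bar>^(k-j) * (8 * (\<Sum>i<n. Zw \<omega> j i))) \<partial>M)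
      \<le> ennreal (\<Sum>j\<in>{1..k}. \<bar>lam\<bar>^(k-j) * (8 * (\<Sum>i<n. 1*V + 1*V)))"
    by (rule nn_sum) (use Zm s2 V0 in \<open>auto intro!: mult_nonneg_nonneg sum_nonneg Zw0\<close>)
  have Sk0: "0 \<le> Sk" unfolding Sk_def by (intro sum_nonneg) auto
  have s4: "(\<integral>\<^sup>+ \<omega>. ennreal (R \<omega>) \<partial>M) \<le> ennreal (Sk * (\<Sum>j\<in>{1..k}. \<bar>lam\<bar>^(k-j) * (8 * (\<Sum>i<n. 1*V + 1*V))))"
    unfolding R_def
    by (rule nn_cmult) (use Zm s3 V0 Sk0 in \<open>auto intro!: mult_nonneg_nonneg sum_nonneg Zw0\<close>)
  have fin: "Sk * (\<Sum>j\<in>{1..k}. \<bar>lam\<bar>^(k-j) * (8 * (\<Sum>i<n. 1*V + 1*V))) \<le> 4 * C2 / (real k + 2)\<^sup>2"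
  proof -
    have e: "(\<Sum>i<n. 1*V + 1*V) = (\<Sum>i<n. 2*(2*G\<^sup>2 + 2*Kc\<^sup>2))" by (simp add: V_def)
    have p1: "2 * G + 2 * L * (D + 2 * C1) \<le> \<psi>" unfolding \<psi>_def by simp
    have p2: "4 * L * (D + 2 * C1) * \<psi> + 4 * G * \<psi> + 8 * G\<^sup>2 + 8 * L\<^sup>2 * (D + 2 * C1)\<^sup>2 \<le> \<psi>h"
      unfolding \<psi>h_def by simp
    show ?thesis unfolding e Sk_def
      by (rule final_arith[OF k0 lk n2 k L0 D0 G_pos Kc_def
            C1_def[THEN meta_eq_to_obj_eq] p1 p2 C2_def[THEN meta_eq_to_obj_eq]])
  qed
  have "(\<integral>\<^sup>+ \<omega>. ennreal ((norm (p k i \<omega> - avg n (\<lambda>j. y k j \<omega>)))\<^sup>2) \<partial>M) \<le> (\<integral>\<^sup>+ \<omega>. ennreal (R \<omega>) \<partial>M)"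
    by (intro nn_integral_mono ennreal_leI path)
  also have "\<dots> \<le> ennreal (4 * C2 / (real k + 2)\<^sup>2)" using s4 fin by (meson ennreal_leI order_trans)
  finally show "(\<integral>\<^sup>+ \<omega>. ennreal ((norm (p k i \<omega> - avg n (\<lambda>j. y k j \<omega>)))\<^sup>2) \<partial>M)
        \<le> ennreal (4 * C2 / (real k + 2)\<^sup>2)" .
qed

end
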